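(* Let $D_{\hat 1},D_{\hat 2},D_{\hat 3},D_{\hat 4}$ be positive real numbers (with $D_{\hat i}$ standing for $D_{[4]\setminus\{i\}}$, $[4]=\{1,2,3,4\}$). There exists a positive-weighted (simple, finite) graph $\mathcal G=(G,w)$ with $[4]\subseteq V(G)$ such that $D_{\hat i}(\mathcal G)=D_{\hat i}$ for $i=1,2,3,4$ if and only if (i) $5D_{\hat t}\le 3D_{\hat k}+3D_{\hat j}+2D_{\hat i}$ for all pairwise distinct $i,j,k,t\in[4]$, and (ii) $D_{\hat i}<D_{\hat k}+D_{\hat j}$ for all pairwise distinct $i,j,k\in[4]$.
   Context: All graphs are simple and finite. A positive-weighted graph $\mathcal G=(G,w)$ is a graph $G$ with a function $w:E(G)\to\mathbb R_{>0}$; for a subgraph $G'$, $w(G')$ is the sum of the weights of the edges of $G'$. For distinct vertices $i_1,\dots,i_k$ of $G$, $D_{\{i_1,\dots,i_k\}}(\mathcal G)$ is the minimum of $w(R)$ over all connected subgraphs $R$ of $G$ whose vertex set contains $i_1,\dots,i_k$. We write $D_{\hat i}(\mathcal G)=D_{[4]\setminus\{i\}}(\mathcal G)$. The graph may have vertices other than $1,2,3,4$. *)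

theory Defs
  imports Complex_Main
begin

definition simple_graph :: "nat set \<Rightarrow> nat set set \<Rightarrow> bool" where
  "simple_graph V E \<longleftrightarrow> finite V \<and> (\<forall>e\<in>E. \<exists>u v. u \<noteq> v \<and> u \<in> V \<and> v \<in> V \<and> e = {u, v})"

definition pos_weighted_graph :: "nat set \<Rightarrow> nat set set \<Rightarrow> (nat set \<Rightarrow> real) \<Rightarrow> bool" where
  "pos_weighted_graph V E w \<longleftrightarrow> simple_graph V E \<and> (\<forall>e\<in>E. w e > 0)"

definition connected_subgraph :: "nat set \<Rightarrow> nat set set \<Rightarrow> nat set \<Rightarrow> nat set set \<Rightarrow> bool" where
  "connected_subgraph V E V' E' \<longleftrightarrow> V' \<subseteq> V \<and> E' \<subseteq> E \<and> (\<forall>e\<in>E'. e \<subseteq> V') \<and> V' \<noteq> {} \<and>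
     (\<forall>x\<in>V'. \<forall>y\<in>V'. (\<lambda>a b. {a, b} \<in> E')\<^sup>*\<^sup>* x y)"

definition conn_weights :: "nat set \<Rightarrow> nat set set \<Rightarrow> (nat set \<Rightarrow> real) \<Rightarrow> nat set \<Rightarrow> real set" where
  "conn_weights V E w S = {sum w E' | V' E'. connected_subgraph V E V' E' \<and> S \<subseteq> V'}"

text \<open>D_S(G): minimum weight of a connected subgraph containing S (meaningful when
conn_weights is nonempty; the theorem requires this explicitly).\<close>
definition D :: "nat set \<Rightarrow> nat set set \<Rightarrow> (nat set \<Rightarrow> real) \<Rightarrow> nat set \<Rightarrow> real" where
  "D V E w S = Min (conn_weights V E w S)"

definition D_hat :: "nat set \<Rightarrow> nat set set \<Rightarrow> (nat set \<Rightarrow> real) \<Rightarrow> nat \<Rightarrow> real" where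
  "D_hat V E w i = D V E w ({1,2,3,4} - {i})"

end

theory Submission
  imports Defs
begin



abbreviation rel :: "nat set set \<Rightarrow> nat \<Rightarrow> nat \<Rightarrow> bool" where
  "rel E' \<equiv> (\<lambda>a b. {a, b} \<in> E')"

lemma rel_sym: "(rel E')\<^sup>*\<^sup>* x y \<Longrightarrow> (rel E')\<^sup>*\<^sup>* y x"
proof (induction rule: rtranclp_induct)
  case base then show ?case by simp
next
  case (step y z)
  then have "rel E' z y" by (simp add: insert_commute)
  then show ?case using step(3) by (rule converse_rtranclp_into_rtranclp)
qed

lemma rel_mono: "(rel A)\<^sup>*\<^sup>* x y \<Longrightarrow> A \<subseteq> B \<Longrightarrow> (rel B)\<^sup>*\<^sup>* x y"
  by (induction rule: rtranclp_induct) (auto intro: rtranclp.rtrancl_into_rtrancl)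

lemma simple_finite_E: "simple_graph V E \<Longrightarrow> finite E"
proof -
  assume a: "simple_graph V E"
  then have "E \<subseteq> Pow V" unfolding simple_graph_def by auto
  moreover have "finite V" using a unfolding simple_graph_def by blast
  ultimately show ?thesis by (simp add: finite_subset)
qed

lemma pwg_finite_E: "pos_weighted_graph V E w \<Longrightarrow> finite E"
  unfolding pos_weighted_graph_def using simple_finite_E by blast

lemma pwg_edge: "pos_weighted_graph V E w \<Longrightarrow> e \<in> E \<Longrightarrow> \<exists>u v. u \<noteq> v \<and> u \<in> V \<and> v \<in> V \<and> e = {u, v}"
  unfolding pos_weighted_graph_def simple_graph_def by blast

lemma pwg_pos: "pos_weighted_graph V E w \<Longrightarrow> e \<in> E \<Longrightarrow> w e > 0"
  unfolding pos_weighted_graph_def by blast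

lemma pwg_finite_V: "pos_weighted_graph V E w \<Longrightarrow> finite V"
  unfolding pos_weighted_graph_def simple_graph_def by blast

lemma sum_nonneg_sub: "pos_weighted_graph V E w \<Longrightarrow> E' \<subseteq> E \<Longrightarrow> sum w E' \<ge> 0"
  using pwg_pos[of V E w] by (intro sum_nonneg) (auto intro: less_imp_le)

lemma sum_mono_sub: "pos_weighted_graph V E w \<Longrightarrow> A \<subseteq> B \<Longrightarrow> B \<subseteq> E \<Longrightarrow> sum w A \<le> sum w B"
proof -
  assume a: "pos_weighted_graph V E w" "A \<subseteq> B" "B \<subseteq> E"
  have "finite B" using a pwg_finite_E finite_subset by blast
  moreover have "\<forall>b\<in>B - A. 0 \<le> w b" using a pwg_pos by (metis DiffD1 less_imp_le subsetD)
  ultimately show ?thesis using sum_mono2 a(2) by blast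
qed

lemma finite_conn_weights: "pos_weighted_graph V E w \<Longrightarrow> finite (conn_weights V E w S)"
proof -
  assume a: "pos_weighted_graph V E w"
  have "conn_weights V E w S \<subseteq> (\<lambda>(V',E'). sum w E') ` (Pow V \<times> Pow E)"
    unfolding conn_weights_def connected_subgraph_def by auto
  moreover have "finite (Pow V \<times> Pow E)" using a pwg_finite_E pwg_finite_V by blast
  ultimately show ?thesis using finite_subset finite_imageI by blast
qed

lemma D_le: "pos_weighted_graph V E w \<Longrightarrow> connected_subgraph V E V' E' \<Longrightarrow> S \<subseteq> V' \<Longrightarrow> D V E w S \<le> sum w E'"
  unfolding D_def
  apply (rule Min_le)
   apply (erule finite_conn_weights)
  unfolding conn_weights_def by blast

lemma D_in: "pos_weighted_graph V E w \<Longrightarrow> conn_weights V E w S \<noteq> {} \<Longrightarrow>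
   \<exists>V' E'. connected_subgraph V E V' E' \<and> S \<subseteq> V' \<and> D V E w S = sum w E'"
proof -
  assume a: "pos_weighted_graph V E w" "conn_weights V E w S \<noteq> {}"
  have "D V E w S \<in> conn_weights V E w S" unfolding D_def
    using a finite_conn_weights Min_in by blast
  then show ?thesis unfolding conn_weights_def by auto
qed

lemma cw_I: "connected_subgraph V E V' E' \<Longrightarrow> S \<subseteq> V' \<Longrightarrow> conn_weights V E w S \<noteq> {}"
  unfolding conn_weights_def by blast

lemma D_eqI: "pos_weighted_graph V E w \<Longrightarrow> connected_subgraph V E V0 E0 \<Longrightarrow> S \<subseteq> V0 \<Longrightarrow> sum w E0 = T \<Longrightarrow>
   (\<And>V' E'. connected_subgraph V E V' E' \<Longrightarrow> S \<subseteq> V' \<Longrightarrow> T \<le> sum w E') \<Longrightarrow> D V E w S = T"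
proof -
  assume a: "pos_weighted_graph V E w" "connected_subgraph V E V0 E0" "S \<subseteq> V0" "sum w E0 = T"
    and b: "\<And>V' E'. connected_subgraph V E V' E' \<Longrightarrow> S \<subseteq> V' \<Longrightarrow> T \<le> sum w E'"
  have "D V E w S \<le> T" using D_le a by metis
  moreover obtain V' E' where "connected_subgraph V E V' E'" "S \<subseteq> V'" "D V E w S = sum w E'"
    using D_in a cw_I by metis
  then have "T \<le> D V E w S" using b by simp
  ultimately show ?thesis by simp
qed

lemma cs_finite: "pos_weighted_graph V E w \<Longrightarrow> connected_subgraph V E V' E' \<Longrightarrow> finite E'"
proof -
  assume a: "pos_weighted_graph V E w" "connected_subgraph V E V' E'"
  have "E' \<subseteq> E" using a(2) unfolding connected_subgraph_def by simp
  then show ?thesis using pwg_finite_E[OF a(1)] finite_subset by auto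
qed

lemma cs_union: "connected_subgraph V E V1 E1 \<Longrightarrow> connected_subgraph V E V2 E2 \<Longrightarrow> V1 \<inter> V2 \<noteq> {} \<Longrightarrow>
  connected_subgraph V E (V1 \<union> V2) (E1 \<union> E2)"
proof -
  assume a: "connected_subgraph V E V1 E1" "connected_subgraph V E V2 E2" "V1 \<inter> V2 \<noteq> {}"
  then obtain z where z: "z \<in> V1" "z \<in> V2" by blast
  have c1: "\<forall>x\<in>V1. \<forall>y\<in>V1. (rel E1)\<^sup>*\<^sup>* x y" using a(1) unfolding connected_subgraph_def by simp
  have c2: "\<forall>x\<in>V2. \<forall>y\<in>V2. (rel E2)\<^sup>*\<^sup>* x y" using a(2) unfolding connected_subgraph_def by simp
  have r1: "(rel (E1 \<union> E2))\<^sup>*\<^sup>* x y" if "x \<in> V1" "y \<in> V1" for x y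
    using c1 that rel_mono[of E1 x y "E1 \<union> E2"] by simp
  have r2: "(rel (E1 \<union> E2))\<^sup>*\<^sup>* x y" if "x \<in> V2" "y \<in> V2" for x y
    using c2 that rel_mono[of E2 x y "E1 \<union> E2"] by simp
  have "(rel (E1 \<union> E2))\<^sup>*\<^sup>* x y" if "x \<in> V1 \<union> V2" "y \<in> V1 \<union> V2" for x y
  proof -
    have "(rel (E1 \<union> E2))\<^sup>*\<^sup>* x z" using that z r1 r2 by (cases "x \<in> V1") auto
    moreover have "(rel (E1 \<union> E2))\<^sup>*\<^sup>* z y" using that z r1 r2 by (cases "y \<in> V1") auto
    ultimately show ?thesis by simp
  qed
  moreover have "V1 \<union> V2 \<subseteq> V" "E1 \<union> E2 \<subseteq> E" "\<forall>e\<in>E1 \<union> E2. e \<subseteq> V1 \<union> V2" "V1 \<union> V2 \<noteq> {}"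
    using a(1,2) z unfolding connected_subgraph_def by auto
  ultimately show ?thesis unfolding connected_subgraph_def by simp
qed

lemma sum_union_le: "pos_weighted_graph V E w \<Longrightarrow> E1 \<subseteq> E \<Longrightarrow> E2 \<subseteq> E \<Longrightarrow> sum w (E1 \<union> E2) \<le> sum w E1 + sum w E2"
proof -
  assume a: "pos_weighted_graph V E w" "E1 \<subseteq> E" "E2 \<subseteq> E"
  have f: "finite E1" "finite E2" using a pwg_finite_E finite_subset by blast+
  have "sum w (E1 \<union> E2) = sum w E1 + sum w E2 - sum w (E1 \<inter> E2)"
    using sum_Un[OF f] by simp
  moreover have "sum w (E1 \<inter> E2) \<ge> 0" using sum_nonneg_sub[OF a(1)] a by blast
  ultimately show ?thesis by simp
qed

lemma D_union: "pos_weighted_graph V E w \<Longrightarrow> conn_weights V E w S1 \<noteq> {} \<Longrightarrow> conn_weights V E w S2 \<noteq> {} \<Longrightarrow>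
  S1 \<inter> S2 \<noteq> {} \<Longrightarrow> S \<subseteq> S1 \<union> S2 \<Longrightarrow> conn_weights V E w S \<noteq> {} \<and> D V E w S \<le> D V E w S1 + D V E w S2"
proof -
  assume a: "pos_weighted_graph V E w" "conn_weights V E w S1 \<noteq> {}" "conn_weights V E w S2 \<noteq> {}"
    "S1 \<inter> S2 \<noteq> {}" "S \<subseteq> S1 \<union> S2"
  obtain V1 E1 where 1: "connected_subgraph V E V1 E1" "S1 \<subseteq> V1" "D V E w S1 = sum w E1" using D_in a by metis
  obtain V2 E2 where 2: "connected_subgraph V E V2 E2" "S2 \<subseteq> V2" "D V E w S2 = sum w E2" using D_in a by metis
  have "V1 \<inter> V2 \<noteq> {}" using a(4) 1(2) 2(2) by auto
  then have c: "connected_subgraph V E (V1 \<union> V2) (E1 \<union> E2)" using cs_union 1(1) 2(1) by simp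
  have s: "S \<subseteq> V1 \<union> V2" using a(5) 1(2) 2(2) by auto
  have "D V E w S \<le> sum w (E1 \<union> E2)" using D_le[OF a(1) c s] .
  also have "\<dots> \<le> sum w E1 + sum w E2" using sum_union_le[OF a(1)] 1(1) 2(1) unfolding connected_subgraph_def by simp
  finally show ?thesis using cw_I[OF c s] 1 2 by simp
qed



lemma comp_cs:
  assumes cs: "connected_subgraph V E V' E'" and E0: "E0 \<subseteq> E'" and z: "z \<in> V'"
  shows "connected_subgraph V E {x. (rel E0)\<^sup>*\<^sup>* z x} {e\<in>E0. e \<subseteq> {x. (rel E0)\<^sup>*\<^sup>* z x}}"
proof -
  let ?R = "{x. (rel E0)\<^sup>*\<^sup>* z x}"
  let ?ER = "{e\<in>E0. e \<subseteq> ?R}"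
  have sub: "\<forall>e\<in>E'. e \<subseteq> V'" "V' \<subseteq> V" "E' \<subseteq> E" using cs unfolding connected_subgraph_def by auto
  have inV: "x \<in> V'" if "(rel E0)\<^sup>*\<^sup>* z x" for x
    using that
  proof (induction rule: rtranclp_induct)
    case base then show ?case using z by simp
  next
    case (step y x)
    then have "{y, x} \<in> E'" using E0 by auto
    then show ?case using sub(1) by auto
  qed
  have reach: "(rel ?ER)\<^sup>*\<^sup>* z x" if "(rel E0)\<^sup>*\<^sup>* z x" for x
    using that
  proof (induction rule: rtranclp_induct)
    case base then show ?case by simp
  next
    case (step y x)
    have "(rel E0)\<^sup>*\<^sup>* z x" using step(1,2) by (rule rtranclp.rtrancl_into_rtrancl)
    then have "{y, x} \<in> ?ER" using step(1,2) by auto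
    then show ?case using step(3) by (simp add: rtranclp.rtrancl_into_rtrancl)
  qed
  have conn: "(rel ?ER)\<^sup>*\<^sup>* x y" if "x \<in> ?R" "y \<in> ?R" for x y
  proof -
    have "(rel ?ER)\<^sup>*\<^sup>* x z" using reach that(1) rel_sym by blast
    moreover have "(rel ?ER)\<^sup>*\<^sup>* z y" using reach that(2) by blast
    ultimately show ?thesis by simp
  qed
  have "?R \<subseteq> V" using inV sub(2) by auto
  moreover have "?ER \<subseteq> E" using E0 sub(3) by auto
  moreover have "?R \<noteq> {}" by auto
  ultimately show ?thesis unfolding connected_subgraph_def using conn by auto
qed

lemma rel_empty: "(rel {})\<^sup>*\<^sup>* x y \<Longrightarrow> x = y"
  by (induction rule: rtranclp_induct) auto

lemma combine:
  fixes f :: "nat \<Rightarrow> nat \<Rightarrow> real"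
  assumes tri: "\<forall>x\<in>V. \<forall>y\<in>V. \<forall>z\<in>V. f x z \<le> f x y + f y z"
    and uv: "f u v \<le> we" and V: "P \<subseteq> V" "u \<in> V" "v \<in> V" "z \<in> V"
    and h1: "\<exists>p\<in>P. f p x + f p y + f p u \<le> Su" and h2: "f v z \<le> Sv"
  shows "\<exists>p\<in>P. f p x + f p y + f p z \<le> Su + we + Sv"
proof -
  obtain p where p: "p \<in> P" "f p x + f p y + f p u \<le> Su" using h1 by blast
  have "f p z \<le> f p u + f u z" using tri p(1) V by blast
  moreover have "f u z \<le> f u v + f v z" using tri V by blast
  ultimately have "f p x + f p y + f p z \<le> Su + we + Sv" using p(2) uv h2 by linarith
  then show ?thesis using p(1) by blast
qed

lemma key_lemma:
  fixes f :: "nat \<Rightarrow> nat \<Rightarrow> real"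
  assumes pwg: "pos_weighted_graph V E w"
    and tri: "\<forall>x\<in>V. \<forall>y\<in>V. \<forall>z\<in>V. f x z \<le> f x y + f y z"
    and edge: "\<forall>u\<in>V. \<forall>v\<in>V. {u,v} \<in> E \<longrightarrow> f u v \<le> w {u,v}"
    and refl: "\<forall>x\<in>V. f x x \<le> 0"
  shows "connected_subgraph V E V' E' \<Longrightarrow> (\<forall>x\<in>V'. \<forall>y\<in>V'. f x y \<le> sum w E') \<and>
    (\<forall>a\<in>V'. \<forall>b\<in>V'. \<forall>c\<in>V'. \<exists>p\<in>V'. f p a + f p b + f p c \<le> sum w E')"
proof (induction "card E'" arbitrary: V' E' rule: less_induct)
  case less
  note cs = less.prems
  have sub: "\<forall>e\<in>E'. e \<subseteq> V'" "V' \<subseteq> V" "E' \<subseteq> E" "V' \<noteq> {}" "\<forall>x\<in>V'. \<forall>y\<in>V'. (rel E')\<^sup>*\<^sup>* x y"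
    using cs unfolding connected_subgraph_def by auto
  have finE': "finite E'" using cs_finite[OF pwg cs] .
  show ?case
  proof (cases "E' = {}")
    case True
    then have eq: "x = y" if "x \<in> V'" "y \<in> V'" for x y using sub(5) that rel_empty by blast
    have "\<forall>x\<in>V'. \<forall>y\<in>V'. f x y \<le> sum w E'" using eq refl sub(2) True by auto
    moreover have "\<forall>a\<in>V'. \<forall>b\<in>V'. \<forall>c\<in>V'. \<exists>p\<in>V'. f p a + f p b + f p c \<le> sum w E'"
    proof (intro ballI)
      fix a b c assume "a \<in> V'" "b \<in> V'" "c \<in> V'"
      then have "b = a" "c = a" "f a a \<le> 0" using eq refl sub(2) by auto
      then show "\<exists>p\<in>V'. f p a + f p b + f p c \<le> sum w E'" using \<open>a \<in> V'\<close> True by auto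
    qed
    ultimately show ?thesis by simp
  next
    case False
    then obtain e where eE: "e \<in> E'" by blast
    then obtain u v where uv: "u \<noteq> v" "u \<in> V" "v \<in> V" "e = {u,v}" using pwg_edge[OF pwg] sub(3) by blast
    have uvV': "u \<in> V'" "v \<in> V'" using sub(1) eE uv(4) by auto
    define E0 where "E0 = E' - {e}"
    have E0sub: "E0 \<subseteq> E'" unfolding E0_def by auto
    have cardE0: "card E0 < card E'" unfolding E0_def using eE finE' card_gt_0_iff by (metis card_Diff1_less)
    define Ru where "Ru = {x. (rel E0)\<^sup>*\<^sup>* u x}"
    define Rv where "Rv = {x. (rel E0)\<^sup>*\<^sup>* v x}"
    have uRu: "u \<in> Ru" and vRv: "v \<in> Rv" unfolding Ru_def Rv_def by auto
    have cover: "x \<in> Ru \<or> x \<in> Rv" if "x \<in> V'" for x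
    proof -
      have "(rel E')\<^sup>*\<^sup>* u x" using sub(5) uvV' that by blast
      then show ?thesis
      proof (induction rule: rtranclp_induct)
        case base then show ?case using uRu by simp
      next
        case (step y x)
        show ?case
        proof (cases "{y, x} = e")
          case True
          then have "x = u \<or> x = v" using uv(4) by (auto simp: doubleton_eq_iff)
          then show ?thesis using uRu vRv by blast
        next
          case False
          then have "{y,x} \<in> E0" using step(2) unfolding E0_def by auto
          then show ?thesis using step(3) unfolding Ru_def Rv_def
            by (auto intro: rtranclp.rtrancl_into_rtrancl)
        qed
      qed
    qed
    have sumE0: "sum w E0 \<le> sum w E'" using sum_mono_sub[OF pwg E0sub sub(3)] .
    have we: "w e > 0" using pwg_pos[OF pwg] eE sub(3) by auto
    show ?thesis
    proof (cases "v \<in> Ru")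
      case True
      have reachu: "(rel E0)\<^sup>*\<^sup>* u x" if "x \<in> V'" for x
      proof -
        have "x \<in> Ru \<or> x \<in> Rv" using cover that .
        moreover have "(rel E0)\<^sup>*\<^sup>* u v" using True unfolding Ru_def by simp
        ultimately show ?thesis unfolding Ru_def Rv_def by auto
      qed
      have "connected_subgraph V E V' E0"
      proof -
        have "(rel E0)\<^sup>*\<^sup>* x y" if "x \<in> V'" "y \<in> V'" for x y
          using reachu[OF that(1)] reachu[OF that(2)] rel_sym by (meson rtranclp_trans)
        then show ?thesis using sub E0sub unfolding connected_subgraph_def by auto
      qed
      then have IH: "(\<forall>x\<in>V'. \<forall>y\<in>V'. f x y \<le> sum w E0) \<and>
        (\<forall>a\<in>V'. \<forall>b\<in>V'. \<forall>c\<in>V'. \<exists>p\<in>V'. f p a + f p b + f p c \<le> sum w E0)"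
        using less.hyps cardE0 by blast
      then show ?thesis using sumE0 by (meson order_trans)
    next
      case False
      define Eu where "Eu = {e\<in>E0. e \<subseteq> Ru}"
      define Ev where "Ev = {e\<in>E0. e \<subseteq> Rv}"
      have csu: "connected_subgraph V E Ru Eu" unfolding Eu_def Ru_def using comp_cs[OF cs E0sub uvV'(1)] .
      have csv: "connected_subgraph V E Rv Ev" unfolding Ev_def Rv_def using comp_cs[OF cs E0sub uvV'(2)] .
      have disj: "Ru \<inter> Rv = {}"
      proof (rule ccontr)
        assume "Ru \<inter> Rv \<noteq> {}"
        then obtain x where "(rel E0)\<^sup>*\<^sup>* u x" "(rel E0)\<^sup>*\<^sup>* v x" unfolding Ru_def Rv_def by auto
        then have "(rel E0)\<^sup>*\<^sup>* u v" using rel_sym by (meson rtranclp_trans)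
        then show False using False unfolding Ru_def by simp
      qed
      have RuV': "Ru \<subseteq> V'" and RvV': "Rv \<subseteq> V'"
      proof -
        have "(rel E0)\<^sup>*\<^sup>* z x \<Longrightarrow> z \<in> V' \<Longrightarrow> x \<in> V'" for z x
        proof (induction rule: rtranclp_induct)
          case (step y x)
          then have "{y,x} \<in> E'" using E0sub by auto
          then show ?case using sub(1) by auto
        qed simp
        then show "Ru \<subseteq> V'" "Rv \<subseteq> V'" unfolding Ru_def Rv_def using uvV' by auto
      qed
      have E0split: "E0 = Eu \<union> Ev"
      proof
        show "Eu \<union> Ev \<subseteq> E0" unfolding Eu_def Ev_def by auto
      next
        show "E0 \<subseteq> Eu \<union> Ev"
        proof
          fix e' assume e': "e' \<in> E0"
          then obtain a b where ab: "e' = {a,b}" using pwg_edge[OF pwg] E0sub sub(3) by blast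
          have "e' \<subseteq> V'" using e' E0sub sub(1) by auto
          then have abV: "a \<in> V'" "b \<in> V'" using ab by auto
          have rab: "rel E0 a b" "rel E0 b a" using e' ab by (auto simp: insert_commute)
          have "a \<in> Ru \<or> a \<in> Rv" using cover abV by blast
          then show "e' \<in> Eu \<union> Ev"
          proof
            assume "a \<in> Ru"
            then have "b \<in> Ru" using rab unfolding Ru_def by (auto intro: rtranclp.rtrancl_into_rtrancl)
            then show ?thesis using \<open>a \<in> Ru\<close> e' ab unfolding Eu_def by auto
          next
            assume "a \<in> Rv"
            then have "b \<in> Rv" using rab unfolding Rv_def by (auto intro: rtranclp.rtrancl_into_rtrancl)
            then show ?thesis using \<open>a \<in> Rv\<close> e' ab unfolding Ev_def by auto
          qed
        qed
      qed
      have Edisj: "Eu \<inter> Ev = {}"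
      proof (rule ccontr)
        assume "Eu \<inter> Ev \<noteq> {}"
        then obtain e' where "e' \<in> Eu" "e' \<in> Ev" by blast
        then have "e' \<in> E0" "e' \<subseteq> Ru" "e' \<subseteq> Rv" unfolding Eu_def Ev_def by auto
        moreover obtain a b where "e' = {a,b}" using pwg_edge[OF pwg] E0sub sub(3) \<open>e' \<in> E0\<close> by blast
        ultimately show False using disj by auto
      qed
      have "Eu \<subseteq> E'" "Ev \<subseteq> E'" using E0split E0sub by auto
      then have finEu: "finite Eu" "finite Ev" using finE' finite_subset by blast+
      have "E' = insert e E0" unfolding E0_def using eE by auto
      moreover have "e \<notin> E0" unfolding E0_def by auto
      ultimately have "sum w E' = w e + sum w E0" using finE' E0sub finite_subset
        by (metis sum.insert)
      moreover have "sum w E0 = sum w Eu + sum w Ev" unfolding E0split using Edisj finEu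
        by (simp add: sum.union_disjoint)
      ultimately have sumE': "sum w E' = w e + sum w Eu + sum w Ev" by simp
      have finE0: "finite E0" using finE' E0sub finite_subset by blast
      have "card Eu \<le> card E0" "card Ev \<le> card E0" using card_mono[OF finE0] E0split by auto
      then have cardu: "card Eu < card E'" "card Ev < card E'" using cardE0 by auto
      have IHu: "(\<forall>x\<in>Ru. \<forall>y\<in>Ru. f x y \<le> sum w Eu) \<and>
        (\<forall>a\<in>Ru. \<forall>b\<in>Ru. \<forall>c\<in>Ru. \<exists>p\<in>Ru. f p a + f p b + f p c \<le> sum w Eu)"
        using less.hyps cardu(1) csu by blast
      have IHv: "(\<forall>x\<in>Rv. \<forall>y\<in>Rv. f x y \<le> sum w Ev) \<and>
        (\<forall>a\<in>Rv. \<forall>b\<in>Rv. \<forall>c\<in>Rv. \<exists>p\<in>Rv. f p a + f p b + f p c \<le> sum w Ev)"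
        using less.hyps cardu(2) csv by blast
      have nu: "sum w Eu \<ge> 0" and nv: "sum w Ev \<ge> 0"
        using sum_nonneg_sub[OF pwg] csu csv unfolding connected_subgraph_def by auto
      have "{u,v} \<in> E" using eE uv(4) sub(3) by auto
      moreover have "{v,u} = {u,v}" by (rule insert_commute)
      ultimately have "f u v \<le> w {u,v}" "f v u \<le> w {u,v}" using edge uv(2,3) by metis+
      then have fuv: "f u v \<le> w e" "f v u \<le> w e" using uv(4) by auto
      have RuV: "Ru \<subseteq> V" and RvV: "Rv \<subseteq> V" using RuV' RvV' sub(2) by auto
      have pair: "\<forall>x\<in>V'. \<forall>y\<in>V'. f x y \<le> sum w E'"
      proof (intro ballI)
        fix x y assume xy: "x \<in> V'" "y \<in> V'"
        have xyV: "x \<in> V" "y \<in> V" using xy sub(2) by auto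
        consider "x \<in> Ru" "y \<in> Ru" | "x \<in> Rv" "y \<in> Rv" | "x \<in> Ru" "y \<in> Rv" | "x \<in> Rv" "y \<in> Ru"
          using cover xy by blast
        then show "f x y \<le> sum w E'"
        proof cases
          case 1
          then have "f x y \<le> sum w Eu" using IHu by blast
          then show ?thesis using sumE' nv we by linarith
        next
          case 2
          then have "f x y \<le> sum w Ev" using IHv by blast
          then show ?thesis using sumE' nu we by linarith
        next
          case 3
          have "f x y \<le> f x u + f u y" using tri xyV uv by blast
          moreover have "f u y \<le> f u v + f v y" using tri xyV uv by blast
          moreover have "f x u \<le> sum w Eu" using IHu 3 uRu by blast
          moreover have "f v y \<le> sum w Ev" using IHv 3 vRv by blast
          ultimately show ?thesis using sumE' fuv by linarith
        next
          case 4
          have "f x y \<le> f x v + f v y" using tri xyV uv by blast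
          moreover have "f v y \<le> f v u + f u y" using tri xyV uv by blast
          moreover have "f x v \<le> sum w Ev" using IHv 4 vRv by blast
          moreover have "f u y \<le> sum w Eu" using IHu 4 uRu by blast
          ultimately show ?thesis using sumE' fuv by linarith
        qed
      qed
      have triple: "\<forall>a\<in>V'. \<forall>b\<in>V'. \<forall>c\<in>V'. \<exists>p\<in>V'. f p a + f p b + f p c \<le> sum w E'"
      proof (intro ballI)
        fix a b c assume abc: "a \<in> V'" "b \<in> V'" "c \<in> V'"
        have abcV: "a \<in> V" "b \<in> V" "c \<in> V" using abc sub(2) by auto
        have tu: "\<exists>p\<in>Ru. f p x + f p y + f p z \<le> sum w E'" if "x \<in> Ru" "y \<in> Ru" "z \<in> Ru" for x y z
        proof -
          note h = that
          obtain p where "p \<in> Ru" "f p x + f p y + f p z \<le> sum w Eu" using IHu h by blast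
          moreover have "sum w Eu \<le> sum w E'" using sumE' nv we by linarith
          ultimately show ?thesis by force
        qed
        have tv: "\<exists>p\<in>Rv. f p x + f p y + f p z \<le> sum w E'" if "x \<in> Rv" "y \<in> Rv" "z \<in> Rv" for x y z
        proof -
          note h = that
          obtain p where "p \<in> Rv" "f p x + f p y + f p z \<le> sum w Ev" using IHv h by blast
          moreover have "sum w Ev \<le> sum w E'" using sumE' nu we by linarith
          ultimately show ?thesis by force
        qed
        have cu: "\<exists>p\<in>Ru. f p x + f p y + f p z \<le> sum w E'" if "x \<in> Ru" "y \<in> Ru" "z \<in> Rv" for x y z
        proof -
          have "\<exists>p\<in>Ru. f p x + f p y + f p u \<le> sum w Eu" using IHu that uRu by blast
          moreover have "f v z \<le> sum w Ev" using IHv that vRv by blast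
          moreover have "z \<in> V" using that RvV by auto
          ultimately have "\<exists>p\<in>Ru. f p x + f p y + f p z \<le> sum w Eu + w e + sum w Ev"
            using combine[OF tri fuv(1) RuV uv(2,3)] by blast
          then show ?thesis using sumE' by (simp add: add_ac)
        qed
        have cv: "\<exists>p\<in>Rv. f p x + f p y + f p z \<le> sum w E'" if "x \<in> Rv" "y \<in> Rv" "z \<in> Ru" for x y z
        proof -
          have "\<exists>p\<in>Rv. f p x + f p y + f p v \<le> sum w Ev" using IHv that vRv by blast
          moreover have "f u z \<le> sum w Eu" using IHu that uRu by blast
          moreover have "z \<in> V" using that RuV by auto
          ultimately have "\<exists>p\<in>Rv. f p x + f p y + f p z \<le> sum w Ev + w e + sum w Eu"
            using combine[OF tri fuv(2) RvV uv(3,2)] by blast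
          then show ?thesis using sumE' by (simp add: add_ac)
        qed
        have perm1: "\<exists>p\<in>V'. f p a + f p b + f p c \<le> sum w E'" if "\<exists>p\<in>V'. f p a + f p c + f p b \<le> sum w E'"
          using that by (simp add: add_ac)
        have perm2: "\<exists>p\<in>V'. f p a + f p b + f p c \<le> sum w E'" if "\<exists>p\<in>V'. f p b + f p c + f p a \<le> sum w E'"
          using that by (simp add: add_ac)
        consider "a \<in> Ru" "b \<in> Ru" "c \<in> Ru" | "a \<in> Rv" "b \<in> Rv" "c \<in> Rv"
          | "a \<in> Ru" "b \<in> Ru" "c \<in> Rv" | "a \<in> Ru" "b \<in> Rv" "c \<in> Ru" | "a \<in> Rv" "b \<in> Ru" "c \<in> Ru"
          | "a \<in> Rv" "b \<in> Rv" "c \<in> Ru" | "a \<in> Rv" "b \<in> Ru" "c \<in> Rv" | "a \<in> Ru" "b \<in> Rv" "c \<in> Rv"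
          using cover abc by blast
        then show "\<exists>p\<in>V'. f p a + f p b + f p c \<le> sum w E'"
        proof cases
          case 1 then show ?thesis using tu RuV' by blast
        next
          case 2 then show ?thesis using tv RvV' by blast
        next
          case 3 then show ?thesis using cu RuV' by blast
        next
          case 4 then show ?thesis using cu[of a c b] RuV' perm1 by blast
        next
          case 5 then show ?thesis using cu[of b c a] RuV' perm2 by blast
        next
          case 6 then show ?thesis using cv RvV' by blast
        next
          case 7 then show ?thesis using cv[of a c b] RvV' perm1 by blast
        next
          case 8 then show ?thesis using cv[of b c a] RvV' perm2 by blast
        qed
      qed
      show ?thesis using pair triple by simp
    qed
  qed
qed



definition fD :: "nat set \<Rightarrow> nat set set \<Rightarrow> (nat set \<Rightarrow> real) \<Rightarrow> nat \<Rightarrow> nat \<Rightarrow> real" where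
  "fD V E w x y = (if conn_weights V E w {x,y} \<noteq> {} then D V E w {x,y} else sum w E + 1)"

lemma cw_sub: "conn_weights V E w S \<noteq> {} \<Longrightarrow> S \<subseteq> V"
  unfolding conn_weights_def connected_subgraph_def by auto

lemma D_bounds:
  assumes pwg: "pos_weighted_graph V E w" and c: "conn_weights V E w S \<noteq> {}"
  shows "0 \<le> D V E w S" "D V E w S \<le> sum w E"
proof -
  obtain V' E' where "connected_subgraph V E V' E'" "S \<subseteq> V'" "D V E w S = sum w E'" using D_in[OF pwg c] by blast
  moreover then have "E' \<subseteq> E" unfolding connected_subgraph_def by simp
  ultimately show "0 \<le> D V E w S" "D V E w S \<le> sum w E"
    using sum_nonneg_sub[OF pwg] sum_mono_sub[OF pwg] by auto
qed

lemma sumE_nonneg: "pos_weighted_graph V E w \<Longrightarrow> sum w E \<ge> 0"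
  using sum_nonneg_sub by blast

lemma fD_nonneg: "pos_weighted_graph V E w \<Longrightarrow> fD V E w x y \<ge> 0"
  unfolding fD_def using D_bounds sumE_nonneg by (smt (verit))

lemma fD_le: "pos_weighted_graph V E w \<Longrightarrow> fD V E w x y \<le> sum w E + 1"
  unfolding fD_def using D_bounds by (smt (verit))

lemma fD_sym: "fD V E w x y = fD V E w y x"
  unfolding fD_def by (simp add: insert_commute)

lemma fD_tri:
  assumes pwg: "pos_weighted_graph V E w"
  shows "fD V E w x z \<le> fD V E w x y + fD V E w y z"
proof (cases "conn_weights V E w {x,y} \<noteq> {} \<and> conn_weights V E w {y,z} \<noteq> {}")
  case True
  then have "conn_weights V E w {x,z} \<noteq> {} \<and> D V E w {x,z} \<le> D V E w {x,y} + D V E w {y,z}"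
    using D_union[OF pwg, of "{x,y}" "{y,z}" "{x,z}"] by auto
  then show ?thesis unfolding fD_def using True by simp
next
  case False
  then have "fD V E w x y = sum w E + 1 \<or> fD V E w y z = sum w E + 1" unfolding fD_def by auto
  then show ?thesis using fD_le[OF pwg, of x z] fD_nonneg[OF pwg, of x y] fD_nonneg[OF pwg, of y z] by auto
qed

lemma cs_edge: "{u,v} \<in> E \<Longrightarrow> u \<in> V \<Longrightarrow> v \<in> V \<Longrightarrow> connected_subgraph V E {u,v} {{u,v}}"
proof -
  assume a: "{u,v} \<in> E" "u \<in> V" "v \<in> V"
  have "rel {{u,v}} u v" "rel {{u,v}} v u" by (auto simp: insert_commute)
  then have "(rel {{u,v}})\<^sup>*\<^sup>* x y" if "x \<in> {u,v}" "y \<in> {u,v}" for x y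
    using that by auto
  then show ?thesis unfolding connected_subgraph_def using a by auto
qed

lemma cs_single: "x \<in> V \<Longrightarrow> connected_subgraph V E {x} {}"
  unfolding connected_subgraph_def by auto

lemma fD_edge:
  assumes pwg: "pos_weighted_graph V E w" and e: "{u,v} \<in> E" "u \<in> V" "v \<in> V"
  shows "fD V E w u v \<le> w {u,v}"
proof -
  have c: "connected_subgraph V E {u,v} {{u,v}}" using cs_edge e by blast
  then have "conn_weights V E w {u,v} \<noteq> {}" using cw_I by blast
  moreover have "D V E w {u,v} \<le> w {u,v}" using D_le[OF pwg c] by simp
  ultimately show ?thesis unfolding fD_def by simp
qed

lemma fD_refl:
  assumes pwg: "pos_weighted_graph V E w" and x: "x \<in> V"
  shows "fD V E w x x \<le> 0"
proof -
  have c: "connected_subgraph V E {x} {}" using cs_single x by blast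
  then have "conn_weights V E w {x,x} \<noteq> {}" using cw_I by fastforce
  moreover have "D V E w {x,x} \<le> 0" using D_le[OF pwg c, of "{x,x}"] by simp
  ultimately show ?thesis unfolding fD_def by simp
qed

lemma fD_pos:
  assumes pwg: "pos_weighted_graph V E w" and xy: "x \<noteq> y"
  shows "fD V E w x y > 0"
proof (cases "conn_weights V E w {x,y} \<noteq> {}")
  case True
  obtain V' E' where c: "connected_subgraph V E V' E'" "{x,y} \<subseteq> V'" "D V E w {x,y} = sum w E'"
    using D_in[OF pwg True] by blast
  have "E' \<noteq> {}"
  proof
    assume "E' = {}"
    then have "(rel {})\<^sup>*\<^sup>* x y" using c unfolding connected_subgraph_def by auto
    then show False using rel_empty xy by blast
  qed
  moreover have "finite E'" using cs_finite[OF pwg c(1)] .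
  moreover have "\<forall>e\<in>E'. w e > 0" using c(1) pwg_pos[OF pwg] unfolding connected_subgraph_def by auto
  ultimately have "sum w E' > 0" by (simp add: sum_pos)
  then show ?thesis unfolding fD_def using True c by simp
next
  case False
  then show ?thesis unfolding fD_def using sumE_nonneg[OF pwg] by simp
qed

lemma fD_upper:
  assumes pwg: "pos_weighted_graph V E w" and c: "conn_weights V E w {a,b,c} \<noteq> {}"
  shows "D V E w {a,b,c} \<le> fD V E w q a + fD V E w q b + fD V E w q c"
proof (cases "conn_weights V E w {q,a} \<noteq> {} \<and> conn_weights V E w {q,b} \<noteq> {} \<and> conn_weights V E w {q,c} \<noteq> {}")
  case True
  have 1: "conn_weights V E w {q,a,b} \<noteq> {} \<and> D V E w {q,a,b} \<le> D V E w {q,a} + D V E w {q,b}"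
    using D_union[OF pwg, of "{q,a}" "{q,b}" "{q,a,b}"] True by auto
  have 2: "conn_weights V E w {a,b,c} \<noteq> {} \<and> D V E w {a,b,c} \<le> D V E w {q,a,b} + D V E w {q,c}"
    using D_union[OF pwg, of "{q,a,b}" "{q,c}" "{a,b,c}"] True 1 by auto
  show ?thesis using 1 2 True unfolding fD_def by simp
next
  case False
  then have "fD V E w q a = sum w E + 1 \<or> fD V E w q b = sum w E + 1 \<or> fD V E w q c = sum w E + 1"
    unfolding fD_def by auto
  then show ?thesis using D_bounds[OF pwg c] fD_nonneg[OF pwg, of q a] fD_nonneg[OF pwg, of q b]
      fD_nonneg[OF pwg, of q c] by auto
qed

lemma fD_center:
  assumes pwg: "pos_weighted_graph V E w" and c: "conn_weights V E w {a,b,c} \<noteq> {}"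
  shows "\<exists>p\<in>V. fD V E w p a + fD V E w p b + fD V E w p c \<le> D V E w {a,b,c}"
proof -
  obtain V' E' where cs: "connected_subgraph V E V' E'" "{a,b,c} \<subseteq> V'" "D V E w {a,b,c} = sum w E'"
    using D_in[OF pwg c] by blast
  have tri: "\<forall>x\<in>V. \<forall>y\<in>V. \<forall>z\<in>V. fD V E w x z \<le> fD V E w x y + fD V E w y z"
    using fD_tri[OF pwg] by blast
  have edge: "\<forall>u\<in>V. \<forall>v\<in>V. {u,v} \<in> E \<longrightarrow> fD V E w u v \<le> w {u,v}"
    using fD_edge[OF pwg] by blast
  have refl: "\<forall>x\<in>V. fD V E w x x \<le> 0" using fD_refl[OF pwg] by blast
  have "\<forall>a\<in>V'. \<forall>b\<in>V'. \<forall>c\<in>V'. \<exists>p\<in>V'. fD V E w p a + fD V E w p b + fD V E w p c \<le> sum w E'"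
    using key_lemma[OF pwg tri edge refl cs(1)] by blast
  moreover have "a \<in> V'" "b \<in> V'" "c \<in> V'" using cs(2) by auto
  ultimately have "\<exists>p\<in>V'. fD V E w p a + fD V E w p b + fD V E w p c \<le> sum w E'" by blast
  then obtain p where "p \<in> V'" "fD V E w p a + fD V E w p b + fD V E w p c \<le> sum w E'" by blast
  moreover have "V' \<subseteq> V" using cs(1) unfolding connected_subgraph_def by simp
  ultimately show ?thesis using cs(3) by auto
qed

lemma nec_main:
  assumes pwg: "pos_weighted_graph V E w"
    and d: "i \<noteq> j" "i \<noteq> k" "i \<noteq> t" "j \<noteq> k" "j \<noteq> t" "k \<noteq> t"
    and c1: "conn_weights V E w {i,j,k} \<noteq> {}" and c2: "conn_weights V E w {i,j,t} \<noteq> {}"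
    and c3: "conn_weights V E w {i,k,t} \<noteq> {}" and c4: "conn_weights V E w {j,k,t} \<noteq> {}"
  shows "5 * D V E w {i,j,k} \<le> 3 * D V E w {i,j,t} + 3 * D V E w {i,k,t} + 2 * D V E w {j,k,t}"
    "D V E w {j,k,t} < D V E w {i,j,t} + D V E w {i,k,t}"
proof -
  define f where "f = fD V E w"
  have sym: "\<And>x y. f x y = f y x" unfolding f_def using fD_sym by metis
  have tri: "\<And>x y z. f x z \<le> f x y + f y z" unfolding f_def using fD_tri[OF pwg] by blast
  have pos: "\<And>x y. x \<noteq> y \<Longrightarrow> f x y > 0" unfolding f_def using fD_pos[OF pwg] by blast
  have up: "\<And>q a b c. conn_weights V E w {a,b,c} \<noteq> {} \<Longrightarrow> D V E w {a,b,c} \<le> f q a + f q b + f q c"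
    unfolding f_def using fD_upper[OF pwg] by blast
  have V: "i \<in> V" "j \<in> V" "k \<in> V" "t \<in> V" using cw_sub[OF c1] cw_sub[OF c2] by auto
  have refl: "f i i \<le> 0" "f t t \<le> 0" unfolding f_def using fD_refl[OF pwg] V by auto
  obtain P where P: "f P i + f P j + f P t \<le> D V E w {i,j,t}" using fD_center[OF pwg c2] unfolding f_def by blast
  obtain Q where Q: "f Q i + f Q k + f Q t \<le> D V E w {i,k,t}" using fD_center[OF pwg c3] unfolding f_def by blast
  obtain R where R: "f R j + f R k + f R t \<le> D V E w {j,k,t}" using fD_center[OF pwg c4] unfolding f_def by blast
  have t1: "D V E w {i,j,k} \<le> f i i + f i j + f i k" using up[OF c1] .
  have t2: "D V E w {i,j,k} \<le> f P i + f P j + f P k" using up[OF c1] .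
  have t3: "D V E w {i,j,k} \<le> f Q i + f Q j + f Q k" using up[OF c1] .
  have t4: "D V E w {i,j,k} \<le> f R i + f R j + f R k" using up[OF c1] .
  have "f i j \<le> f i P + f P j" "f i k \<le> f i Q + f Q k" "f P k \<le> f P t + f t k" "f t k \<le> f t Q + f Q k"
    "f Q j \<le> f Q t + f t j" "f t j \<le> f t P + f P j" "f R i \<le> f R t + f t i" "f t i \<le> f t P + f P i"
    "f t i \<le> f t Q + f Q i" using tri by blast+
  moreover have "f i P = f P i" "f i Q = f Q i" "f t Q = f Q t" "f t P = f P t" using sym by blast+
  ultimately show "5 * D V E w {i,j,k} \<le> 3 * D V E w {i,j,t} + 3 * D V E w {i,k,t} + 2 * D V E w {j,k,t}"
    using t1 t2 t3 t4 P Q R refl by linarith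
  have s1: "D V E w {j,k,t} \<le> f P j + f P k + f P t" using up[OF c4] .
  have s2: "D V E w {j,k,t} \<le> f Q j + f Q k + f Q t" using up[OF c4] .
  have s3: "D V E w {j,k,t} \<le> f t j + f t k + f t t" using up[OF c4] .
  have "f P k \<le> f P i + f i k" "f i k \<le> f i Q + f Q k" "f Q j \<le> f Q i + f i j" "f i j \<le> f i P + f P j"
    "f t j \<le> f t P + f P j" "f t k \<le> f t Q + f Q k" using tri by blast+
  moreover have "f i P = f P i" "f i Q = f Q i" "f t Q = f Q t" "f t P = f P t" using sym by blast+
  moreover have "f P t > 0 \<or> f Q t > 0 \<or> f P i > 0"
  proof (cases "P = t")
    case True then show ?thesis using pos d by auto
  next
    case False then show ?thesis using pos by auto
  qed
  moreover have "f Q t \<ge> 0" "f P t \<ge> 0" "f P i \<ge> 0" "f Q i \<ge> 0"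
    unfolding f_def using fD_nonneg[OF pwg] by auto
  ultimately show "D V E w {j,k,t} < D V E w {i,j,t} + D V E w {i,k,t}"
    using s1 s2 s3 P Q refl by linarith
qed



definition mkE :: "(nat \<times> nat) list \<Rightarrow> nat set set" where
  "mkE L = (\<lambda>(x,y). {x,y}) ` set L"

lemma mkE_simps: "mkE [] = {}" "mkE ((x,y) # L) = insert {x,y} (mkE L)"
  unfolding mkE_def by auto

lemma suff_exact:
  fixes P :: "nat \<Rightarrow> nat \<Rightarrow> real"
  assumes pwg: "pos_weighted_graph V E w"
    and fin: "finite I"
    and lip: "\<forall>i\<in>I. \<forall>u\<in>V. \<forall>v\<in>V. {u,v} \<in> E \<longrightarrow> \<bar>P i u - P i v\<bar> \<le> w {u,v}"
    and abc: "a \<in> I" "b \<in> I" "c \<in> I" "P a a = 0" "P b b = 0" "P c c = 0"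
    and lb: "\<forall>q\<in>V. T \<le> P a q + P b q + P c q"
    and cs0: "connected_subgraph V E V0 E0" "{a,b,c} \<subseteq> V0" "sum w E0 = T"
  shows "conn_weights V E w {a,b,c} \<noteq> {} \<and> D V E w {a,b,c} = T"
proof -
  define f where "f x y = Max ((\<lambda>i. \<bar>P i x - P i y\<bar>) ` I)" for x y
  have ne: "I \<noteq> {}" using abc by auto
  have ge: "\<bar>P i x - P i y\<bar> \<le> f x y" if "i \<in> I" for i x y
    unfolding f_def using fin that by (intro Max_ge) auto
  have tri: "\<forall>x\<in>V. \<forall>y\<in>V. \<forall>z\<in>V. f x z \<le> f x y + f y z"
  proof (intro ballI)
    fix x y z
    have "\<forall>i\<in>I. \<bar>P i x - P i z\<bar> \<le> f x y + f y z"
    proof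
      fix i assume i: "i \<in> I"
      have "\<bar>P i x - P i z\<bar> \<le> \<bar>P i x - P i y\<bar> + \<bar>P i y - P i z\<bar>" by linarith
      then show "\<bar>P i x - P i z\<bar> \<le> f x y + f y z" using ge[OF i, of x y] ge[OF i, of y z] by linarith
    qed
    then show "f x z \<le> f x y + f y z" unfolding f_def using fin ne by (subst Max_le_iff) auto
  qed
  have edge: "\<forall>u\<in>V. \<forall>v\<in>V. {u,v} \<in> E \<longrightarrow> f u v \<le> w {u,v}"
    unfolding f_def using lip fin ne by (subst Max_le_iff) auto
  have refl: "\<forall>x\<in>V. f x x \<le> 0"
    unfolding f_def using fin ne by (subst Max_le_iff) auto
  show ?thesis
  proof
    show "conn_weights V E w {a,b,c} \<noteq> {}" using cw_I[OF cs0(1,2)] .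
    show "D V E w {a,b,c} = T"
    proof (rule D_eqI[OF pwg cs0])
      fix V' E' assume cs: "connected_subgraph V E V' E'" "{a,b,c} \<subseteq> V'"
      have "\<forall>a\<in>V'. \<forall>b\<in>V'. \<forall>c\<in>V'. \<exists>p\<in>V'. f p a + f p b + f p c \<le> sum w E'"
        using key_lemma[OF pwg tri edge refl cs(1)] by blast
      moreover have "a \<in> V'" "b \<in> V'" "c \<in> V'" using cs(2) by auto
      ultimately have "\<exists>p\<in>V'. f p a + f p b + f p c \<le> sum w E'" by blast
      then obtain p where p: "p \<in> V'" "f p a + f p b + f p c \<le> sum w E'" by blast
      have "p \<in> V" using p(1) cs(1) unfolding connected_subgraph_def by auto
      then have "T \<le> P a p + P b p + P c p" using lb by blast
      moreover have "P a p \<le> f p a" "P b p \<le> f p b" "P c p \<le> f p c"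
        using ge[OF abc(1), of p a] ge[OF abc(2), of p b] ge[OF abc(3), of p c] abc(4-6) by auto
      ultimately show "T \<le> sum w E'" using p(2) by linarith
    qed
  qed
qed

lemma pwg_mkE:
  assumes "finite V" "\<forall>(x,y)\<in>set L. x \<noteq> y \<and> x \<in> V \<and> y \<in> V \<and> w {x,y} > 0"
  shows "pos_weighted_graph V (mkE L) w"
  using assms unfolding pos_weighted_graph_def simple_graph_def mkE_def by fastforce

lemma lip_mkE:
  fixes P :: "nat \<Rightarrow> nat \<Rightarrow> real"
  assumes "\<forall>(x,y)\<in>set L. \<forall>i\<in>I. \<bar>P i x - P i y\<bar> \<le> w {x,y}"
  shows "\<forall>i\<in>I. \<forall>u\<in>V. \<forall>v\<in>V. {u,v} \<in> mkE L \<longrightarrow> \<bar>P i u - P i v\<bar> \<le> w {u,v}"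
proof (intro ballI impI)
  fix i u v assume i: "i \<in> I" and e: "{u,v} \<in> mkE L"
  then obtain x y where xy: "(x,y) \<in> set L" "{u,v} = {x,y}" unfolding mkE_def by auto
  then have h: "\<bar>P i x - P i y\<bar> \<le> w {x,y}" using assms i by auto
  from xy(2) have "(u = x \<and> v = y) \<or> (u = y \<and> v = x)" by (auto simp: doubleton_eq_iff)
  then show "\<bar>P i u - P i v\<bar> \<le> w {u,v}" using h xy(2) by (auto simp: abs_minus_commute)
qed

lemma cs_hub:
  assumes sub: "set L0 \<subseteq> set L" "V0 \<subseteq> V"
    and inV0: "\<forall>(x,y)\<in>set L0. x \<in> V0 \<and> y \<in> V0"
    and h: "h \<in> V0"
    and hub: "\<forall>x\<in>V0. x = h \<or> {h,x} \<in> mkE L0 \<or> ({h, par x} \<in> mkE L0 \<and> {par x, x} \<in> mkE L0)"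
  shows "connected_subgraph V (mkE L) V0 (mkE L0)"
proof -
  have r: "(rel (mkE L0))\<^sup>*\<^sup>* h x" if "x \<in> V0" for x
  proof -
    have "x = h \<or> {h,x} \<in> mkE L0 \<or> ({h, par x} \<in> mkE L0 \<and> {par x, x} \<in> mkE L0)" using hub that by blast
    then show ?thesis
      by (metis (mono_tags, lifting) r_into_rtranclp rtranclp.rtrancl_refl rtranclp.rtrancl_into_rtrancl)
  qed
  have c: "(rel (mkE L0))\<^sup>*\<^sup>* x y" if "x \<in> V0" "y \<in> V0" for x y
    using r[OF that(1)] r[OF that(2)] rel_sym by (meson rtranclp_trans)
  have "mkE L0 \<subseteq> mkE L" using sub unfolding mkE_def by auto
  moreover have "\<forall>e\<in>mkE L0. e \<subseteq> V0" using inV0 unfolding mkE_def by auto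
  ultimately show ?thesis unfolding connected_subgraph_def using c sub h by auto
qed

lemma cs_hub1:
  assumes sub: "set L0 \<subseteq> set L" "V0 \<subseteq> V"
    and inV0: "\<forall>(x,y)\<in>set L0. x \<in> V0 \<and> y \<in> V0"
    and h: "h \<in> V0"
    and hub: "\<forall>x\<in>V0. x = h \<or> {h,x} \<in> mkE L0"
  shows "connected_subgraph V (mkE L) V0 (mkE L0)"
  using cs_hub[OF sub inV0 h, of id] hub by auto

lemma sum_mkE: "distinct (map (\<lambda>(x,y). {x,y}) L) \<Longrightarrow> sum w (mkE L) = sum_list (map (\<lambda>(x,y). w {x,y}) L)"
proof -
  assume d: "distinct (map (\<lambda>(x,y). {x,y}) L)"
  have m: "mkE L = set (map (\<lambda>(x,y). {x,y}) L)" unfolding mkE_def by simp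
  have e: "map w (map (\<lambda>(x,y). {x,y}) L) = map (\<lambda>(x,y). w {x,y}) L" by (induction L) auto
  have "sum w (mkE L) = sum_list (map w (map (\<lambda>(x,y). {x,y}) L))"
    unfolding m using sum_list_distinct_conv_sum_set[OF d, of w] by simp
  then show ?thesis unfolding e .
qed



lemma star_t:
  fixes aj ak al :: real and t j k l :: nat
  assumes dist: "distinct [t,j,k,l]"
    and pos: "aj > 0" "ak > 0" "al > 0"
  shows "\<exists>V E w. pos_weighted_graph V E w \<and> {t,j,k,l} \<subseteq> V \<and>
     conn_weights V E w {j,k,l} \<noteq> {} \<and> D V E w {j,k,l} = aj+ak+al \<and>
     conn_weights V E w {t,k,l} \<noteq> {} \<and> D V E w {t,k,l} = ak+al \<and>
     conn_weights V E w {t,j,l} \<noteq> {} \<and> D V E w {t,j,l} = aj+al \<and>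
     conn_weights V E w {t,j,k} \<noteq> {} \<and> D V E w {t,j,k} = aj+ak"
proof -
  have neq: "t \<noteq> j" "t \<noteq> k" "t \<noteq> l" "j \<noteq> t" "j \<noteq> k" "j \<noteq> l" "k \<noteq> t" "k \<noteq> j" "k \<noteq> l" "l \<noteq> t" "l \<noteq> j" "l \<noteq> k" using dist by auto
  define V where "V = {t,j,k,l::nat}"
  define L where "L = [(t,j),(t,k),(t,l::nat)]"
  define w :: "nat set \<Rightarrow> real" where "w e = (if e = {t,j} then aj else if e = {t,k} then ak else al)" for e
  define P :: "nat \<Rightarrow> nat \<Rightarrow> real" where "P i v =
    (if i = t then (if v = t then 0 else if v = j then aj else if v = k then ak else al)
     else if i = j then (if v = j then 0 else if v = t then aj else if v = k then aj + ak else aj + al)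
     else if i = k then (if v = k then 0 else if v = t then ak else if v = j then ak + aj else ak + al)
     else (if v = l then 0 else if v = t then al else if v = j then al + aj else al + ak))" for i v
  have pwg: "pos_weighted_graph V (mkE L) w"
    by (rule pwg_mkE) (use neq pos in \<open>auto simp: V_def L_def w_def doubleton_eq_iff\<close>)
  have lip: "\<forall>i\<in>{t,j,k,l}. \<forall>u\<in>V. \<forall>v\<in>V. {u,v} \<in> mkE L \<longrightarrow> \<bar>P i u - P i v\<bar> \<le> w {u,v}"
    apply (rule lip_mkE) apply (simp add: L_def w_def P_def doubleton_eq_iff neq)
    using pos by linarith
  have Pz: "P t t = 0" "P j j = 0" "P k k = 0" "P l l = 0" unfolding P_def using neq by auto
  have fin: "finite {t,j,k,l}" by simp
  have I: "t \<in> {t,j,k,l}" "j \<in> {t,j,k,l}" "k \<in> {t,j,k,l}" "l \<in> {t,j,k,l}" by auto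
  have T1: "conn_weights V (mkE L) w {j,k,l} \<noteq> {} \<and> D V (mkE L) w {j,k,l} = aj+ak+al"
  proof (rule suff_exact[OF pwg fin lip I(2,3,4) Pz(2,3,4)])
    show "\<forall>q\<in>V. aj+ak+al \<le> P j q + P k q + P l q"
      using neq pos unfolding V_def P_def by auto
    let ?L0 = "[(t,j),(t,k),(t,l::nat)]"
    show "connected_subgraph V (mkE L) {t,j,k,l} (mkE ?L0)"
      by (rule cs_hub1[where h = t])
         (use neq in \<open>auto simp: L_def V_def mkE_simps doubleton_eq_iff\<close>)
    show "{j,k,l} \<subseteq> {t,j,k,l}" by auto
    show "sum w (mkE ?L0) = aj+ak+al"
      by (subst sum_mkE) (use neq in \<open>auto simp: w_def doubleton_eq_iff\<close>)
  qed
  have T2: "conn_weights V (mkE L) w {t,k,l} \<noteq> {} \<and> D V (mkE L) w {t,k,l} = ak+al"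
  proof (rule suff_exact[OF pwg fin lip I(1,3,4) Pz(1,3,4)])
    show "\<forall>q\<in>V. ak+al \<le> P t q + P k q + P l q"
      using neq pos unfolding V_def P_def by auto
    let ?L0 = "[(t,k),(t,l::nat)]"
    show "connected_subgraph V (mkE L) {t,k,l} (mkE ?L0)"
      by (rule cs_hub1[where h = t])
         (use neq in \<open>auto simp: L_def V_def mkE_simps doubleton_eq_iff\<close>)
    show "{t,k,l} \<subseteq> {t,k,l}" by auto
    show "sum w (mkE ?L0) = ak+al"
      by (subst sum_mkE) (use neq in \<open>auto simp: w_def doubleton_eq_iff\<close>)
  qed
  have T3: "conn_weights V (mkE L) w {t,j,l} \<noteq> {} \<and> D V (mkE L) w {t,j,l} = aj+al"
  proof (rule suff_exact[OF pwg fin lip I(1,2,4) Pz(1,2,4)])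
    show "\<forall>q\<in>V. aj+al \<le> P t q + P j q + P l q"
      using neq pos unfolding V_def P_def by auto
    let ?L0 = "[(t,j),(t,l::nat)]"
    show "connected_subgraph V (mkE L) {t,j,l} (mkE ?L0)"
      by (rule cs_hub1[where h = t])
         (use neq in \<open>auto simp: L_def V_def mkE_simps doubleton_eq_iff\<close>)
    show "{t,j,l} \<subseteq> {t,j,l}" by auto
    show "sum w (mkE ?L0) = aj+al"
      by (subst sum_mkE) (use neq in \<open>auto simp: w_def doubleton_eq_iff\<close>)
  qed
  have T4: "conn_weights V (mkE L) w {t,j,k} \<noteq> {} \<and> D V (mkE L) w {t,j,k} = aj+ak"
  proof (rule suff_exact[OF pwg fin lip I(1,2,3) Pz(1,2,3)])
    show "\<forall>q\<in>V. aj+ak \<le> P t q + P j q + P k q"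
      using neq pos unfolding V_def P_def by auto
    let ?L0 = "[(t,j),(t,k::nat)]"
    show "connected_subgraph V (mkE L) {t,j,k} (mkE ?L0)"
      by (rule cs_hub1[where h = t])
         (use neq in \<open>auto simp: L_def V_def mkE_simps doubleton_eq_iff\<close>)
    show "{t,j,k} \<subseteq> {t,j,k}" by auto
    show "sum w (mkE ?L0) = aj+ak"
      by (subst sum_mkE) (use neq in \<open>auto simp: w_def doubleton_eq_iff\<close>)
  qed
  have "{t,j,k,l} \<subseteq> V" unfolding V_def by auto
  then show ?thesis using pwg T1 T2 T3 T4 by blast
qed



lemma star_c:
  fixes aT aj ak al :: real and c t j k l :: nat
  assumes dist: "distinct [c,t,j,k,l]"
    and pos: "aT > 0" "aj > 0" "ak > 0" "al > 0"
  shows "\<exists>V E w. pos_weighted_graph V E w \<and> {t,j,k,l} \<subseteq> V \<and>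
     conn_weights V E w {j,k,l} \<noteq> {} \<and> D V E w {j,k,l} = aj+ak+al \<and>
     conn_weights V E w {t,k,l} \<noteq> {} \<and> D V E w {t,k,l} = aT+ak+al \<and>
     conn_weights V E w {t,j,l} \<noteq> {} \<and> D V E w {t,j,l} = aT+aj+al \<and>
     conn_weights V E w {t,j,k} \<noteq> {} \<and> D V E w {t,j,k} = aT+aj+ak"
proof -
  have neq: "c \<noteq> t" "c \<noteq> j" "c \<noteq> k" "c \<noteq> l" "t \<noteq> c" "t \<noteq> j" "t \<noteq> k" "t \<noteq> l" "j \<noteq> c" "j \<noteq> t" "j \<noteq> k" "j \<noteq> l" "k \<noteq> c" "k \<noteq> t" "k \<noteq> j" "k \<noteq> l" "l \<noteq> c" "l \<noteq> t" "l \<noteq> j" "l \<noteq> k" using dist by auto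
  define V where "V = {c,t,j,k,l::nat}"
  define L where "L = [(c,t),(c,j),(c,k),(c,l::nat)]"
  define w :: "nat set \<Rightarrow> real" where "w e = (if e = {c,t} then aT else if e = {c,j} then aj else if e = {c,k} then ak else al)" for e
  define P :: "nat \<Rightarrow> nat \<Rightarrow> real" where "P i v =
    (if i = t then (if v = t then 0 else if v = c then aT else if v = j then aT + aj else if v = k then aT + ak else aT + al)
     else if i = j then (if v = j then 0 else if v = c then aj else if v = t then aj + aT else if v = k then aj + ak else aj + al)
     else if i = k then (if v = k then 0 else if v = c then ak else if v = t then ak + aT else if v = j then ak + aj else ak + al)
     else (if v = l then 0 else if v = c then al else if v = t then al + aT else if v = j then al + aj else al + ak))" for i v
  have pwg: "pos_weighted_graph V (mkE L) w"
    by (rule pwg_mkE) (use neq pos in \<open>auto simp: V_def L_def w_def doubleton_eq_iff\<close>)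
  have lip: "\<forall>i\<in>{t,j,k,l}. \<forall>u\<in>V. \<forall>v\<in>V. {u,v} \<in> mkE L \<longrightarrow> \<bar>P i u - P i v\<bar> \<le> w {u,v}"
    apply (rule lip_mkE) apply (simp add: L_def w_def P_def doubleton_eq_iff neq)
    using pos by linarith
  have Pz: "P t t = 0" "P j j = 0" "P k k = 0" "P l l = 0" unfolding P_def using neq by auto
  have fin: "finite {t,j,k,l}" by simp
  have I: "t \<in> {t,j,k,l}" "j \<in> {t,j,k,l}" "k \<in> {t,j,k,l}" "l \<in> {t,j,k,l}" by auto
  have T1: "conn_weights V (mkE L) w {j,k,l} \<noteq> {} \<and> D V (mkE L) w {j,k,l} = aj+ak+al"
  proof (rule suff_exact[OF pwg fin lip I(2,3,4) Pz(2,3,4)])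
    show "\<forall>q\<in>V. aj+ak+al \<le> P j q + P k q + P l q"
      using neq pos unfolding V_def P_def by auto
    let ?L0 = "[(c,j),(c,k),(c,l::nat)]"
    show "connected_subgraph V (mkE L) {c,j,k,l} (mkE ?L0)"
      by (rule cs_hub1[where h = c])
         (use neq in \<open>auto simp: L_def V_def mkE_simps doubleton_eq_iff\<close>)
    show "{j,k,l} \<subseteq> {c,j,k,l}" by auto
    show "sum w (mkE ?L0) = aj+ak+al"
      by (subst sum_mkE) (use neq in \<open>auto simp: w_def doubleton_eq_iff\<close>)
  qed
  have T2: "conn_weights V (mkE L) w {t,k,l} \<noteq> {} \<and> D V (mkE L) w {t,k,l} = aT+ak+al"
  proof (rule suff_exact[OF pwg fin lip I(1,3,4) Pz(1,3,4)])
    show "\<forall>q\<in>V. aT+ak+al \<le> P t q + P k q + P l q"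
      using neq pos unfolding V_def P_def by auto
    let ?L0 = "[(c,t),(c,k),(c,l::nat)]"
    show "connected_subgraph V (mkE L) {c,t,k,l} (mkE ?L0)"
      by (rule cs_hub1[where h = c])
         (use neq in \<open>auto simp: L_def V_def mkE_simps doubleton_eq_iff\<close>)
    show "{t,k,l} \<subseteq> {c,t,k,l}" by auto
    show "sum w (mkE ?L0) = aT+ak+al"
      by (subst sum_mkE) (use neq in \<open>auto simp: w_def doubleton_eq_iff\<close>)
  qed
  have T3: "conn_weights V (mkE L) w {t,j,l} \<noteq> {} \<and> D V (mkE L) w {t,j,l} = aT+aj+al"
  proof (rule suff_exact[OF pwg fin lip I(1,2,4) Pz(1,2,4)])
    show "\<forall>q\<in>V. aT+aj+al \<le> P t q + P j q + P l q"
      using neq pos unfolding V_def P_def by auto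
    let ?L0 = "[(c,t),(c,j),(c,l::nat)]"
    show "connected_subgraph V (mkE L) {c,t,j,l} (mkE ?L0)"
      by (rule cs_hub1[where h = c])
         (use neq in \<open>auto simp: L_def V_def mkE_simps doubleton_eq_iff\<close>)
    show "{t,j,l} \<subseteq> {c,t,j,l}" by auto
    show "sum w (mkE ?L0) = aT+aj+al"
      by (subst sum_mkE) (use neq in \<open>auto simp: w_def doubleton_eq_iff\<close>)
  qed
  have T4: "conn_weights V (mkE L) w {t,j,k} \<noteq> {} \<and> D V (mkE L) w {t,j,k} = aT+aj+ak"
  proof (rule suff_exact[OF pwg fin lip I(1,2,3) Pz(1,2,3)])
    show "\<forall>q\<in>V. aT+aj+ak \<le> P t q + P j q + P k q"
      using neq pos unfolding V_def P_def by auto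
    let ?L0 = "[(c,t),(c,j),(c,k::nat)]"
    show "connected_subgraph V (mkE L) {c,t,j,k} (mkE ?L0)"
      by (rule cs_hub1[where h = c])
         (use neq in \<open>auto simp: L_def V_def mkE_simps doubleton_eq_iff\<close>)
    show "{t,j,k} \<subseteq> {c,t,j,k}" by auto
    show "sum w (mkE ?L0) = aT+aj+ak"
      by (subst sum_mkE) (use neq in \<open>auto simp: w_def doubleton_eq_iff\<close>)
  qed
  have "{t,j,k,l} \<subseteq> V" unfolding V_def by auto
  then show ?thesis using pwg T1 T2 T3 T4 by blast
qed



lemma gadget:
  fixes al bj bk bl :: real and t j k l :: nat
  assumes dist: "distinct [t,j,k,l,5,6,7]"
    and pos: "al > 0" "bj \<ge> 0" "bk \<ge> 0" "bl \<ge> 0"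
  shows "\<exists>V E w. pos_weighted_graph V E w \<and> {t,j,k,l} \<subseteq> V \<and>
     conn_weights V E w {j,k,l} \<noteq> {} \<and> D V E w {j,k,l} = 8*al+bj+bk+bl \<and>
     conn_weights V E w {t,k,l} \<noteq> {} \<and> D V E w {t,k,l} = 5*al+bk+bl \<and>
     conn_weights V E w {t,j,l} \<noteq> {} \<and> D V E w {t,j,l} = 5*al+bj+bl \<and>
     conn_weights V E w {t,j,k} \<noteq> {} \<and> D V E w {t,j,k} = 5*al+bj+bk"
proof -
  have neq: "t \<noteq> j" "t \<noteq> k" "t \<noteq> l" "t \<noteq> 5" "t \<noteq> 6" "t \<noteq> 7" "j \<noteq> t" "j \<noteq> k" "j \<noteq> l" "j \<noteq> 5" "j \<noteq> 6" "j \<noteq> 7" "k \<noteq> t" "k \<noteq> j" "k \<noteq> l" "k \<noteq> 5" "k \<noteq> 6" "k \<noteq> 7" "l \<noteq> t" "l \<noteq> j" "l \<noteq> k" "l \<noteq> 5" "l \<noteq> 6" "l \<noteq> 7" "5 \<noteq> t" "5 \<noteq> j" "5 \<noteq> k" "5 \<noteq> l" "6 \<noteq> t" "6 \<noteq> j" "6 \<noteq> k" "6 \<noteq> l" "7 \<noteq> t" "7 \<noteq> j" "7 \<noteq> k" "7 \<noteq> l" using dist by auto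
  define cj where "cj = 2*al+bj"
  define ck where "ck = 2*al+bk"
  define cl where "cl = 2*al+bl"
  have cpos: "cj \<ge> 2*al" "ck \<ge> 2*al" "cl \<ge> 2*al" unfolding cj_def ck_def cl_def using pos by auto
  define V where "V = {t,j,k,l,5,6,7::nat}"
  define L where "L = [(t,5),(t,6),(t,7),(j,5),(j,6),(k,5),(k,7),(l,6),(l,7::nat)]"
  define w :: "nat set \<Rightarrow> real" where "w e = (if e = {t,5} \<or> e = {t,6} \<or> e = {t,7} then al
     else if e = {j,5} \<or> e = {j,6} then cj else if e = {k,5} \<or> e = {k,7} then ck else cl)" for e
  define P :: "nat \<Rightarrow> nat \<Rightarrow> real" where "P i v =
    (if i = t then (if v = t then 0 else if v = 5 \<or> v = 6 \<or> v = 7 then al else if v = j then al + cj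
        else if v = k then al + ck else al + cl)
     else if i = j then (if v = j then 0 else if v = 5 \<or> v = 6 then cj else if v = t then cj + al
        else if v = 7 then cj + 2*al else if v = k then cj + ck else cj + cl)
     else if i = k then (if v = k then 0 else if v = 5 \<or> v = 7 then ck else if v = t then ck + al
        else if v = 6 then ck + 2*al else if v = j then ck + cj else ck + cl)
     else (if v = l then 0 else if v = 6 \<or> v = 7 then cl else if v = t then cl + al
        else if v = 5 then cl + 2*al else if v = j then cl + cj else cl + ck))" for i v
  have pwg: "pos_weighted_graph V (mkE L) w"
    by (rule pwg_mkE) (use neq pos cpos in \<open>auto simp: V_def L_def w_def doubleton_eq_iff\<close>)
  have lip: "\<forall>i\<in>{t,j,k,l}. \<forall>u\<in>V. \<forall>v\<in>V. {u,v} \<in> mkE L \<longrightarrow> \<bar>P i u - P i v\<bar> \<le> w {u,v}"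
    by (rule lip_mkE) (use neq pos cpos in \<open>auto simp: L_def w_def P_def doubleton_eq_iff\<close>)
  have Pz: "P t t = 0" "P j j = 0" "P k k = 0" "P l l = 0" unfolding P_def using neq by auto
  have fin: "finite {t,j,k,l}" by simp
  have I: "t \<in> {t,j,k,l}" "j \<in> {t,j,k,l}" "k \<in> {t,j,k,l}" "l \<in> {t,j,k,l}" by auto
  have T1: "conn_weights V (mkE L) w {j,k,l} \<noteq> {} \<and> D V (mkE L) w {j,k,l} = 8*al+bj+bk+bl"
  proof (rule suff_exact[OF pwg fin lip I(2,3,4) Pz(2,3,4)])
    show "\<forall>q\<in>V. 8*al+bj+bk+bl \<le> P j q + P k q + P l q"
      using neq pos cpos unfolding V_def P_def cj_def ck_def cl_def by auto
    let ?L0 = "[(t,5),(t,7),(j,5),(k,5),(l,7::nat)]"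
    show "connected_subgraph V (mkE L) {t,5,7,j,k,l} (mkE ?L0)"
      by (rule cs_hub[where h = t and par = "\<lambda>x. if x = l then 7 else 5"])
         (use neq in \<open>auto simp: L_def V_def mkE_simps doubleton_eq_iff\<close>)
    show "{j,k,l} \<subseteq> {t,5,7,j,k,l}" by auto
    show "sum w (mkE ?L0) = 8*al+bj+bk+bl"
      by (subst sum_mkE) (use neq in \<open>auto simp: w_def doubleton_eq_iff cj_def ck_def cl_def\<close>)
  qed
  have T2: "conn_weights V (mkE L) w {t,k,l} \<noteq> {} \<and> D V (mkE L) w {t,k,l} = 5*al+bk+bl"
  proof (rule suff_exact[OF pwg fin lip I(1,3,4) Pz(1,3,4)])
    show "\<forall>q\<in>V. 5*al+bk+bl \<le> P t q + P k q + P l q"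
      using neq pos cpos unfolding V_def P_def cj_def ck_def cl_def by auto
    let ?L0 = "[(t,7),(k,7),(l,7::nat)]"
    show "connected_subgraph V (mkE L) {t,7,k,l} (mkE ?L0)"
      by (rule cs_hub[where h = 7 and par = "\<lambda>x. 7"])
         (use neq in \<open>auto simp: L_def V_def mkE_simps doubleton_eq_iff\<close>)
    show "{t,k,l} \<subseteq> {t,7,k,l}" by auto
    show "sum w (mkE ?L0) = 5*al+bk+bl"
      by (subst sum_mkE) (use neq in \<open>auto simp: w_def doubleton_eq_iff cj_def ck_def cl_def\<close>)
  qed
  have T3: "conn_weights V (mkE L) w {t,j,l} \<noteq> {} \<and> D V (mkE L) w {t,j,l} = 5*al+bj+bl"
  proof (rule suff_exact[OF pwg fin lip I(1,2,4) Pz(1,2,4)])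
    show "\<forall>q\<in>V. 5*al+bj+bl \<le> P t q + P j q + P l q"
      using neq pos cpos unfolding V_def P_def cj_def ck_def cl_def by auto
    let ?L0 = "[(t,6),(j,6),(l,6::nat)]"
    show "connected_subgraph V (mkE L) {t,6,j,l} (mkE ?L0)"
      by (rule cs_hub[where h = 6 and par = "\<lambda>x. 6"])
         (use neq in \<open>auto simp: L_def V_def mkE_simps doubleton_eq_iff\<close>)
    show "{t,j,l} \<subseteq> {t,6,j,l}" by auto
    show "sum w (mkE ?L0) = 5*al+bj+bl"
      by (subst sum_mkE) (use neq in \<open>auto simp: w_def doubleton_eq_iff cj_def ck_def cl_def\<close>)
  qed
  have T4: "conn_weights V (mkE L) w {t,j,k} \<noteq> {} \<and> D V (mkE L) w {t,j,k} = 5*al+bj+bk"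
  proof (rule suff_exact[OF pwg fin lip I(1,2,3) Pz(1,2,3)])
    show "\<forall>q\<in>V. 5*al+bj+bk \<le> P t q + P j q + P k q"
      using neq pos cpos unfolding V_def P_def cj_def ck_def cl_def by auto
    let ?L0 = "[(t,5),(j,5),(k,5::nat)]"
    show "connected_subgraph V (mkE L) {t,5,j,k} (mkE ?L0)"
      by (rule cs_hub[where h = 5 and par = "\<lambda>x. 5"])
         (use neq in \<open>auto simp: L_def V_def mkE_simps doubleton_eq_iff\<close>)
    show "{t,j,k} \<subseteq> {t,5,j,k}" by auto
    show "sum w (mkE ?L0) = 5*al+bj+bk"
      by (subst sum_mkE) (use neq in \<open>auto simp: w_def doubleton_eq_iff cj_def ck_def cl_def\<close>)
  qed
  have "{t,j,k,l} \<subseteq> V" unfolding V_def by auto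
  then show ?thesis using pwg T1 T2 T3 T4 by blast
qed



lemma realize_dom:
  fixes Dh :: "nat \<Rightarrow> real" and t j k l :: nat
  assumes dist: "distinct [t,j,k,l]" and tv: "{t,j,k,l} = {1,2,3,4::nat}"
    and tr: "Dh j < Dh k + Dh l" "Dh k < Dh j + Dh l" "Dh l < Dh j + Dh k"
    and f1: "5*Dh t \<le> 3*Dh k + 3*Dh l + 2*Dh j" "5*Dh t \<le> 3*Dh j + 3*Dh l + 2*Dh k"
      "5*Dh t \<le> 3*Dh j + 3*Dh k + 2*Dh l"
    and dom: "2*Dh t \<ge> Dh j + Dh k + Dh l"
  shows "\<exists>V E w. pos_weighted_graph V E w \<and> {1,2,3,4} \<subseteq> V \<and>
            (\<forall>i\<in>{1,2,3,4::nat}. conn_weights V E w ({1,2,3,4} - {i}) \<noteq> {} \<and> D_hat V E w i = Dh i)"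
proof -
  have key: "\<exists>V E w. pos_weighted_graph V E w \<and> {t,j,k,l} \<subseteq> V \<and>
     conn_weights V E w {j,k,l} \<noteq> {} \<and> D V E w {j,k,l} = Dh t \<and>
     conn_weights V E w {t,k,l} \<noteq> {} \<and> D V E w {t,k,l} = Dh j \<and>
     conn_weights V E w {t,j,l} \<noteq> {} \<and> D V E w {t,j,l} = Dh k \<and>
     conn_weights V E w {t,j,k} \<noteq> {} \<and> D V E w {t,j,k} = Dh l"
  proof (cases "2*Dh t = Dh j + Dh k + Dh l")
    case True
    have p: "(Dh k + Dh l - Dh j)/2 > 0" "(Dh j + Dh l - Dh k)/2 > 0" "(Dh j + Dh k - Dh l)/2 > 0"
      using tr by auto
    have e: "(Dh k + Dh l - Dh j)/2 + (Dh j + Dh l - Dh k)/2 + (Dh j + Dh k - Dh l)/2 = Dh t"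
      "(Dh j + Dh l - Dh k)/2 + (Dh j + Dh k - Dh l)/2 = Dh j"
      "(Dh k + Dh l - Dh j)/2 + (Dh j + Dh k - Dh l)/2 = Dh k"
      "(Dh k + Dh l - Dh j)/2 + (Dh j + Dh l - Dh k)/2 = Dh l"
      using True by (auto simp: field_simps)
    obtain V E w where G: "pos_weighted_graph V E w" "{t,j,k,l} \<subseteq> V"
     "conn_weights V E w {j,k,l} \<noteq> {}" "D V E w {j,k,l} = (Dh k + Dh l - Dh j)/2 + (Dh j + Dh l - Dh k)/2 + (Dh j + Dh k - Dh l)/2"
     "conn_weights V E w {t,k,l} \<noteq> {}" "D V E w {t,k,l} = (Dh j + Dh l - Dh k)/2 + (Dh j + Dh k - Dh l)/2"
     "conn_weights V E w {t,j,l} \<noteq> {}" "D V E w {t,j,l} = (Dh k + Dh l - Dh j)/2 + (Dh j + Dh k - Dh l)/2"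
     "conn_weights V E w {t,j,k} \<noteq> {}" "D V E w {t,j,k} = (Dh k + Dh l - Dh j)/2 + (Dh j + Dh l - Dh k)/2"
      using star_t[OF dist p] by blast
    have "D V E w {j,k,l} = Dh t" "D V E w {t,k,l} = Dh j" "D V E w {t,j,l} = Dh k" "D V E w {t,j,k} = Dh l"
      using G e by linarith+
    then show ?thesis using G by blast
  next
    case False
    define al where "al = 2*Dh t - (Dh j + Dh k + Dh l)"
    define bj where "bj = 3*(Dh j + Dh k + Dh l) - 5*Dh t - Dh j"
    define bk where "bk = 3*(Dh j + Dh k + Dh l) - 5*Dh t - Dh k"
    define bl where "bl = 3*(Dh j + Dh k + Dh l) - 5*Dh t - Dh l"
    have p: "al > 0" "bj \<ge> 0" "bk \<ge> 0" "bl \<ge> 0" unfolding al_def bj_def bk_def bl_def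
      using False dom f1 by auto
    have e: "8*al+bj+bk+bl = Dh t" "5*al+bk+bl = Dh j" "5*al+bj+bl = Dh k" "5*al+bj+bk = Dh l"
      unfolding al_def bj_def bk_def bl_def by auto
    have d2: "distinct [t,j,k,l,5,6,7]"
    proof -
      have "t \<in> {1,2,3,4}" "j \<in> {1,2,3,4}" "k \<in> {1,2,3,4}" "l \<in> {1,2,3,4}" using tv by auto
      then show ?thesis using dist by auto
    qed
    obtain V E w where G: "pos_weighted_graph V E w" "{t,j,k,l} \<subseteq> V"
     "conn_weights V E w {j,k,l} \<noteq> {}" "D V E w {j,k,l} = 8*al+bj+bk+bl"
     "conn_weights V E w {t,k,l} \<noteq> {}" "D V E w {t,k,l} = 5*al+bk+bl"
     "conn_weights V E w {t,j,l} \<noteq> {}" "D V E w {t,j,l} = 5*al+bj+bl"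
     "conn_weights V E w {t,j,k} \<noteq> {}" "D V E w {t,j,k} = 5*al+bj+bk"
      using gadget[OF d2 p] by blast
    have "D V E w {j,k,l} = Dh t" "D V E w {t,k,l} = Dh j" "D V E w {t,j,l} = Dh k" "D V E w {t,j,k} = Dh l"
      using G e by linarith+
    then show ?thesis using G by blast
  qed
  then obtain V E w where G: "pos_weighted_graph V E w" "{t,j,k,l} \<subseteq> V"
     "conn_weights V E w {j,k,l} \<noteq> {}" "D V E w {j,k,l} = Dh t"
     "conn_weights V E w {t,k,l} \<noteq> {}" "D V E w {t,k,l} = Dh j"
     "conn_weights V E w {t,j,l} \<noteq> {}" "D V E w {t,j,l} = Dh k"
     "conn_weights V E w {t,j,k} \<noteq> {}" "D V E w {t,j,k} = Dh l" by blast
  have s: "{1,2,3,4} - {t} = {j,k,l}" "{1,2,3,4} - {j} = {t,k,l}" "{1,2,3,4} - {k} = {t,j,l}"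
    "{1,2,3,4} - {l} = {t,j,k}" unfolding tv[symmetric] using dist by auto
  have "\<forall>i\<in>{t,j,k,l}. conn_weights V E w ({1,2,3,4} - {i}) \<noteq> {} \<and> D_hat V E w i = Dh i"
    unfolding D_hat_def using G s by auto
  then show ?thesis using G(1,2) unfolding tv by blast
qed

lemma realize_nodom:
  fixes Dh :: "nat \<Rightarrow> real"
  assumes nd: "2*Dh 1 < Dh 2 + Dh 3 + Dh 4" "2*Dh 2 < Dh 1 + Dh 3 + Dh 4"
      "2*Dh 3 < Dh 1 + Dh 2 + Dh 4" "2*Dh 4 < Dh 1 + Dh 2 + Dh 3"
  shows "\<exists>V E w. pos_weighted_graph V E w \<and> {1,2,3,4} \<subseteq> V \<and>
            (\<forall>i\<in>{1,2,3,4::nat}. conn_weights V E w ({1,2,3,4} - {i}) \<noteq> {} \<and> D_hat V E w i = Dh i)"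
proof -
  define S where "S = (Dh 1 + Dh 2 + Dh 3 + Dh 4)/3"
  have p: "S - Dh 1 > 0" "S - Dh 2 > 0" "S - Dh 3 > 0" "S - Dh 4 > 0" unfolding S_def using nd by auto
  have e1: "(S - Dh 2) + (S - Dh 3) + (S - Dh 4) = Dh 1" unfolding S_def by (simp add: field_simps)
  have e2: "(S - Dh 1) + (S - Dh 3) + (S - Dh 4) = Dh 2" unfolding S_def by (simp add: field_simps)
  have e3: "(S - Dh 1) + (S - Dh 2) + (S - Dh 4) = Dh 3" unfolding S_def by (simp add: field_simps)
  have e4: "(S - Dh 1) + (S - Dh 2) + (S - Dh 3) = Dh 4" unfolding S_def by (simp add: field_simps)
  note e = e1 e2 e3 e4
  have d: "distinct [0,1,2,3,4::nat]" by simp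
  obtain V E w where G: "pos_weighted_graph V E w" "{1,2,3,4} \<subseteq> V"
     "conn_weights V E w {2,3,4} \<noteq> {}" "D V E w {2,3,4} = (S - Dh 2) + (S - Dh 3) + (S - Dh 4)"
     "conn_weights V E w {1,3,4} \<noteq> {}" "D V E w {1,3,4} = (S - Dh 1) + (S - Dh 3) + (S - Dh 4)"
     "conn_weights V E w {1,2,4} \<noteq> {}" "D V E w {1,2,4} = (S - Dh 1) + (S - Dh 2) + (S - Dh 4)"
     "conn_weights V E w {1,2,3} \<noteq> {}" "D V E w {1,2,3} = (S - Dh 1) + (S - Dh 2) + (S - Dh 3)"
    using star_c[OF d p] by blast
  have H: "D V E w {2,3,4} = Dh 1" "D V E w {1,3,4} = Dh 2" "D V E w {1,2,4} = Dh 3" "D V E w {1,2,3} = Dh 4"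
    using G e by linarith+
  have s: "{1,2,3,4} - {1} = {2,3,4::nat}" "{1,2,3,4} - {2} = {1,3,4::nat}" "{1,2,3,4} - {3} = {1,2,4::nat}"
    "{1,2,3,4} - {4} = {1,2,3::nat}" by auto
  have A1: "conn_weights V E w ({1,2,3,4} - {1}) \<noteq> {} \<and> D_hat V E w 1 = Dh 1"
    unfolding D_hat_def s(1) using H G(3) by blast
  have A2: "conn_weights V E w ({1,2,3,4} - {2}) \<noteq> {} \<and> D_hat V E w 2 = Dh 2"
    unfolding D_hat_def s(2) using H G(5) by blast
  have A3: "conn_weights V E w ({1,2,3,4} - {3}) \<noteq> {} \<and> D_hat V E w 3 = Dh 3"
    unfolding D_hat_def s(3) using H G(7) by blast
  have A4: "conn_weights V E w ({1,2,3,4} - {4}) \<noteq> {} \<and> D_hat V E w 4 = Dh 4"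
    unfolding D_hat_def s(4) using H G(9) by blast
  have "\<forall>i\<in>{1,2,3,4::nat}. conn_weights V E w ({1,2,3,4} - {i}) \<noteq> {} \<and> D_hat V E w i = Dh i"
    using A1 A2 A3 A4 by (intro ballI) (elim insertE; simp only: singleton_iff empty_iff; blast)
  then show ?thesis using G(1,2) by blast
qed

lemma four_diff:
  assumes "i \<in> {1,2,3,4::nat}" "j \<in> {1,2,3,4::nat}" "k \<in> {1,2,3,4::nat}" "t \<in> {1,2,3,4::nat}"
    "i \<noteq> j" "i \<noteq> k" "i \<noteq> t" "j \<noteq> k" "j \<noteq> t" "k \<noteq> t"
  shows "{1,2,3,4} - {t} = {i,j,k}"
proof -
  have "{i,j,k,t} \<subseteq> {1,2,3,4::nat}" using assms by auto
  moreover have "card {i,j,k,t} = 4" using assms by auto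
  moreover have "card {1,2,3,4::nat} = 4" by simp
  ultimately have "{i,j,k,t} = {1,2,3,4}" by (metis card_seteq finite.emptyI finite.insertI order_refl)
  then show ?thesis using assms by auto
qed

lemma fourth:
  shows "\<exists>t\<in>{1,2,3,4::nat}. t \<noteq> i \<and> t \<noteq> j \<and> t \<noteq> k"
proof -
  have "\<not> ((1::nat) \<in> {i,j,k} \<and> (2::nat) \<in> {i,j,k} \<and> (3::nat) \<in> {i,j,k} \<and> (4::nat) \<in> {i,j,k})" by auto
  then show ?thesis by auto
qed

lemma dom_case:
  fixes Dh :: "nat \<Rightarrow> real" and t j k l :: nat
  assumes dist: "distinct [t,j,k,l]" and tv: "{t,j,k,l} = {1,2,3,4::nat}"
    and c1: "\<And>i j k t. i \<in> {1,2,3,4::nat} \<Longrightarrow> j \<in> {1,2,3,4::nat} \<Longrightarrow> k \<in> {1,2,3,4::nat} \<Longrightarrow> t \<in> {1,2,3,4::nat} \<Longrightarrow>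
             i \<noteq> j \<and> i \<noteq> k \<and> i \<noteq> t \<and> j \<noteq> k \<and> j \<noteq> t \<and> k \<noteq> t \<Longrightarrow>
             5 * Dh t \<le> 3 * Dh k + 3 * Dh j + 2 * Dh i"
    and c2: "\<And>i j k. i \<in> {1,2,3,4::nat} \<Longrightarrow> j \<in> {1,2,3,4::nat} \<Longrightarrow> k \<in> {1,2,3,4::nat} \<Longrightarrow>
             i \<noteq> j \<and> i \<noteq> k \<and> j \<noteq> k \<Longrightarrow> Dh i < Dh k + Dh j"
    and dom: "2*Dh t \<ge> Dh j + Dh k + Dh l"
  shows "\<exists>V E w. pos_weighted_graph V E w \<and> {1,2,3,4} \<subseteq> V \<and>
            (\<forall>i\<in>{1,2,3,4::nat}. conn_weights V E w ({1,2,3,4} - {i}) \<noteq> {} \<and> D_hat V E w i = Dh i)"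
proof -
  have mem: "t \<in> {1,2,3,4::nat}" "j \<in> {1,2,3,4::nat}" "k \<in> {1,2,3,4::nat}" "l \<in> {1,2,3,4::nat}"
    using tv by auto
  have neq: "t \<noteq> j" "t \<noteq> k" "t \<noteq> l" "j \<noteq> k" "j \<noteq> l" "k \<noteq> l"
     "j \<noteq> t" "k \<noteq> t" "l \<noteq> t" "k \<noteq> j" "l \<noteq> j" "l \<noteq> k" using dist by auto
  have tr: "Dh j < Dh k + Dh l" "Dh k < Dh j + Dh l" "Dh l < Dh j + Dh k"
    using c2[of j l k] c2[of k l j] c2[of l k j] mem neq by blast+
  have f1: "5*Dh t \<le> 3*Dh k + 3*Dh l + 2*Dh j" "5*Dh t \<le> 3*Dh j + 3*Dh l + 2*Dh k"
      "5*Dh t \<le> 3*Dh j + 3*Dh k + 2*Dh l"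
    using c1[of j l k t] c1[of k l j t] c1[of l k j t] mem neq by blast+
  show ?thesis using realize_dom[OF dist tv tr f1 dom] .
qed

theorem theorem4p2:
  fixes Dh :: "nat \<Rightarrow> real"
  assumes pos: "\<forall>i\<in>{1,2,3,4::nat}. Dh i > 0"
  shows "(\<exists>V E w. pos_weighted_graph V E w \<and> {1,2,3,4} \<subseteq> V \<and>
            (\<forall>i\<in>{1,2,3,4::nat}. conn_weights V E w ({1,2,3,4} - {i}) \<noteq> {} \<and> D_hat V E w i = Dh i))
         \<longleftrightarrow>
         ((\<forall>i\<in>{1,2,3,4::nat}. \<forall>j\<in>{1,2,3,4::nat}. \<forall>k\<in>{1,2,3,4::nat}. \<forall>t\<in>{1,2,3,4::nat}.
             i \<noteq> j \<and> i \<noteq> k \<and> i \<noteq> t \<and> j \<noteq> k \<and> j \<noteq> t \<and> k \<noteq> t \<longrightarrow>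
             5 * Dh t \<le> 3 * Dh k + 3 * Dh j + 2 * Dh i) \<and>
          (\<forall>i\<in>{1,2,3,4::nat}. \<forall>j\<in>{1,2,3,4::nat}. \<forall>k\<in>{1,2,3,4::nat}.
             i \<noteq> j \<and> i \<noteq> k \<and> j \<noteq> k \<longrightarrow> Dh i < Dh k + Dh j))"
proof
  assume "\<exists>V E w. pos_weighted_graph V E w \<and> {1,2,3,4} \<subseteq> V \<and>
            (\<forall>i\<in>{1,2,3,4::nat}. conn_weights V E w ({1,2,3,4} - {i}) \<noteq> {} \<and> D_hat V E w i = Dh i)"
  then obtain V E w where pwg: "pos_weighted_graph V E w"
    and H: "\<forall>i\<in>{1,2,3,4::nat}. conn_weights V E w ({1,2,3,4} - {i}) \<noteq> {} \<and> D_hat V E w i = Dh i"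
    by blast
  have HD: "conn_weights V E w ({1,2,3,4} - {i}) \<noteq> {}" "D V E w ({1,2,3,4} - {i}) = Dh i"
    if "i \<in> {1,2,3,4::nat}" for i using H that unfolding D_hat_def by auto
  have A: "5 * Dh t \<le> 3 * Dh k + 3 * Dh j + 2 * Dh i" and B: "Dh i < Dh k + Dh j"
    if m: "i \<in> {1,2,3,4::nat}" "j \<in> {1,2,3,4::nat}" "k \<in> {1,2,3,4::nat}" "t \<in> {1,2,3,4::nat}"
      and d: "i \<noteq> j" "i \<noteq> k" "i \<noteq> t" "j \<noteq> k" "j \<noteq> t" "k \<noteq> t" for i j k t
  proof -
    have s1: "{1,2,3,4} - {t} = {i,j,k}" using four_diff m d by blast
    have s2: "{1,2,3,4} - {k} = {i,j,t}" using four_diff[of i j t k] m d by auto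
    have s3: "{1,2,3,4} - {j} = {i,k,t}" using four_diff[of i k t j] m d by auto
    have s4: "{1,2,3,4} - {i} = {j,k,t}" using four_diff[of j k t i] m d by auto
    have c: "conn_weights V E w {i,j,k} \<noteq> {}" "conn_weights V E w {i,j,t} \<noteq> {}"
      "conn_weights V E w {i,k,t} \<noteq> {}" "conn_weights V E w {j,k,t} \<noteq> {}"
      using HD(1)[OF m(4)] HD(1)[OF m(3)] HD(1)[OF m(2)] HD(1)[OF m(1)] unfolding s1 s2 s3 s4 by auto
    have e: "D V E w {i,j,k} = Dh t" "D V E w {i,j,t} = Dh k" "D V E w {i,k,t} = Dh j" "D V E w {j,k,t} = Dh i"
      using HD(2)[OF m(4)] HD(2)[OF m(3)] HD(2)[OF m(2)] HD(2)[OF m(1)] unfolding s1 s2 s3 s4 by auto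
    show "5 * Dh t \<le> 3 * Dh k + 3 * Dh j + 2 * Dh i" using nec_main(1)[OF pwg d c] unfolding e by simp
    show "Dh i < Dh k + Dh j" using nec_main(2)[OF pwg d c] unfolding e by simp
  qed
  show "(\<forall>i\<in>{1,2,3,4::nat}. \<forall>j\<in>{1,2,3,4::nat}. \<forall>k\<in>{1,2,3,4::nat}. \<forall>t\<in>{1,2,3,4::nat}.
             i \<noteq> j \<and> i \<noteq> k \<and> i \<noteq> t \<and> j \<noteq> k \<and> j \<noteq> t \<and> k \<noteq> t \<longrightarrow>
             5 * Dh t \<le> 3 * Dh k + 3 * Dh j + 2 * Dh i) \<and>
          (\<forall>i\<in>{1,2,3,4::nat}. \<forall>j\<in>{1,2,3,4::nat}. \<forall>k\<in>{1,2,3,4::nat}.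
             i \<noteq> j \<and> i \<noteq> k \<and> j \<noteq> k \<longrightarrow> Dh i < Dh k + Dh j)"
  proof (intro conjI ballI impI)
    fix i j k t assume "i \<in> {1,2,3,4::nat}" "j \<in> {1,2,3,4::nat}" "k \<in> {1,2,3,4::nat}" "t \<in> {1,2,3,4::nat}"
      "i \<noteq> j \<and> i \<noteq> k \<and> i \<noteq> t \<and> j \<noteq> k \<and> j \<noteq> t \<and> k \<noteq> t"
    then show "5 * Dh t \<le> 3 * Dh k + 3 * Dh j + 2 * Dh i" using A by blast
  next
    fix i j k assume m: "i \<in> {1,2,3,4::nat}" "j \<in> {1,2,3,4::nat}" "k \<in> {1,2,3,4::nat}"
      and d: "i \<noteq> j \<and> i \<noteq> k \<and> j \<noteq> k"
    obtain t where "t \<in> {1,2,3,4::nat}" "t \<noteq> i" "t \<noteq> j" "t \<noteq> k" using fourth[of i j k] by blast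
    then show "Dh i < Dh k + Dh j" using B[of i j k t] m d by auto
  qed
next
  assume "(\<forall>i\<in>{1,2,3,4::nat}. \<forall>j\<in>{1,2,3,4::nat}. \<forall>k\<in>{1,2,3,4::nat}. \<forall>t\<in>{1,2,3,4::nat}.
             i \<noteq> j \<and> i \<noteq> k \<and> i \<noteq> t \<and> j \<noteq> k \<and> j \<noteq> t \<and> k \<noteq> t \<longrightarrow>
             5 * Dh t \<le> 3 * Dh k + 3 * Dh j + 2 * Dh i) \<and>
          (\<forall>i\<in>{1,2,3,4::nat}. \<forall>j\<in>{1,2,3,4::nat}. \<forall>k\<in>{1,2,3,4::nat}.
             i \<noteq> j \<and> i \<noteq> k \<and> j \<noteq> k \<longrightarrow> Dh i < Dh k + Dh j)"
  then have c1: "\<And>i j k t. i \<in> {1,2,3,4::nat} \<Longrightarrow> j \<in> {1,2,3,4::nat} \<Longrightarrow> k \<in> {1,2,3,4::nat} \<Longrightarrow> t \<in> {1,2,3,4::nat} \<Longrightarrow>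
             i \<noteq> j \<and> i \<noteq> k \<and> i \<noteq> t \<and> j \<noteq> k \<and> j \<noteq> t \<and> k \<noteq> t \<Longrightarrow>
             5 * Dh t \<le> 3 * Dh k + 3 * Dh j + 2 * Dh i"
    and c2: "\<And>i j k. i \<in> {1,2,3,4::nat} \<Longrightarrow> j \<in> {1,2,3,4::nat} \<Longrightarrow> k \<in> {1,2,3,4::nat} \<Longrightarrow>
             i \<noteq> j \<and> i \<noteq> k \<and> j \<noteq> k \<Longrightarrow> Dh i < Dh k + Dh j"
    by blast+
  consider "2*Dh 1 \<ge> Dh 2 + Dh 3 + Dh 4" | "2*Dh 2 \<ge> Dh 1 + Dh 3 + Dh 4"
    | "2*Dh 3 \<ge> Dh 1 + Dh 2 + Dh 4" | "2*Dh 4 \<ge> Dh 1 + Dh 2 + Dh 3"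
    | "2*Dh 1 < Dh 2 + Dh 3 + Dh 4" "2*Dh 2 < Dh 1 + Dh 3 + Dh 4"
      "2*Dh 3 < Dh 1 + Dh 2 + Dh 4" "2*Dh 4 < Dh 1 + Dh 2 + Dh 3"
    by linarith
  then show "\<exists>V E w. pos_weighted_graph V E w \<and> {1,2,3,4} \<subseteq> V \<and>
            (\<forall>i\<in>{1,2,3,4::nat}. conn_weights V E w ({1,2,3,4} - {i}) \<noteq> {} \<and> D_hat V E w i = Dh i)"
  proof cases
    case 1 then show ?thesis using dom_case[of 1 2 3 4 Dh, OF _ _ c1 c2] by simp
  next
    case 2
    have "{2,1,3,4} = {1,2,3,4::nat}" by auto
    then show ?thesis using dom_case[of 2 1 3 4 Dh, OF _ _ c1 c2] 2 by simp
  next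
    case 3
    have "{3,1,2,4} = {1,2,3,4::nat}" by auto
    then show ?thesis using dom_case[of 3 1 2 4 Dh, OF _ _ c1 c2] 3 by simp
  next
    case 4
    have "{4,1,2,3} = {1,2,3,4::nat}" by auto
    then show ?thesis using dom_case[of 4 1 2 3 Dh, OF _ _ c1 c2] 4 by simp
  next
    case 5 then show ?thesis using realize_nodom by blast
  qed
qed

end
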